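(* Let $\frac12\le\alpha\le1$, $\mu>0$, and $\theta_0\in H^s$ for some $s>1$. (a) There exists $T>0$ depending only on $\|\theta_0\|_s$ (and $\mu$) such that the regularized QG initial value problem has a unique solution $\theta\in L^\infty([0,T];H^s)$. (b) If $T_*$ denotes the supremum of all $T>0$ such that the regularized QG initial value problem has a solution in $L^\infty([0,T];H^s)$, then either $T_*=\infty$ or $\limsup_{t\uparrow T_*}\|\theta(\cdot,t)\|_s=\infty$.
   Context: Setting: $\Omega=[0,2\pi]^2$ with periodic boundary conditions; all functions are periodic with zero mean. For a periodic distribution $f$, $\hat f(k)=(2\pi)^{-2}\int_\Omega f(x)e^{-ik\cdot x}\,dx$, $k\in\mathbb Z^2$. $\Lambda=(-\Delta)^{1/2}$, $\widehat{\Lambda^\beta f}(k)=|k|^\beta\hat f(k)$. Riesz transforms: $\widehat{\mathcal R_j f}(k)=-i\frac{k_j}{|k|}\hat f(k)$, $k\ne0$. $\|f\|_s=(\sum_k|k|^{2s}|\hat f(k)|^2)^{1/2}$, $H^s=\{f:\|f\|_s<\infty\}$. The regularized QG initial value problem (with zero forcing) is $$\theta_t+u\cdot\nabla\theta+\mu(-\Delta)^\alpha\theta_t=0,\quad u=(-\mathcal R_2\theta,\mathcal R_1\theta),\quad\theta(x,0)=\theta_0(x),$$ with $0\le\alpha\le1$, $\mu>0$. A solution on $[0,T]$ in $L^\infty([0,T];H^s)$ means $\theta\in L^\infty([0,T];H^s)$ satisfying the integral form $$\theta(t)=\theta_0-\int_0^t(1+\mu\Lambda^{2\alpha})^{-1}\nabla\cdot\big(u\theta\big)(\tau)\,d\tau,\qquad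 u=(-\mathcal R_2\theta,\mathcal R_1\theta).$$ *)

theory Defs
  imports "HOL-Analysis.Analysis" "HOL-Library.Liminf_Limsup"
begin

text \<open>Periodic functions on [0,2pi]^2 are represented by their Fourier coefficients
  indexed by k in Z^2 (pairs of integers).\<close>

type_synonym fcoef = "int \<times> int \<Rightarrow> complex"

definition knorm :: "int \<times> int \<Rightarrow> real" where
  "knorm k = sqrt (real_of_int (fst k) ^ 2 + real_of_int (snd k) ^ 2)"

text \<open>Real-valued with zero mean.\<close>
definition zm_real :: "fcoef \<Rightarrow> bool" where
  "zm_real f \<longleftrightarrow> f (0, 0) = 0 \<and> (\<forall>k. f (- fst k, - snd k) = cnj (f k))"

definition in_Hs :: "real \<Rightarrow> fcoef \<Rightarrow> bool" where
  "in_Hs s f \<longleftrightarrow> (\<lambda>k. knorm k powr (2 * s) * (cmod (f k))\<^sup>2) summable_on UNIV"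

definition hs_norm :: "real \<Rightarrow> fcoef \<Rightarrow> real" where
  "hs_norm s f = sqrt (\<Sum>\<^sub>\<infinity>k. knorm k powr (2 * s) * (cmod (f k))\<^sup>2)"

definition riesz1 :: "fcoef \<Rightarrow> fcoef" where
  "riesz1 f k = - \<i> * of_real (real_of_int (fst k) / knorm k) * f k"

definition riesz2 :: "fcoef \<Rightarrow> fcoef" where
  "riesz2 f k = - \<i> * of_real (real_of_int (snd k) / knorm k) * f k"

text \<open>Fourier coefficients of a product: discrete convolution.\<close>
definition conv :: "fcoef \<Rightarrow> fcoef \<Rightarrow> fcoef" where
  "conv f g k = (\<Sum>\<^sub>\<infinity>j. f j * g (fst k - fst j, snd k - snd j))"

text \<open>Fourier coefficients of div(u theta), u = (-R_2 theta, R_1 theta).\<close>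
definition qg_nonlin :: "fcoef \<Rightarrow> fcoef" where
  "qg_nonlin th k =
     \<i> * of_int (fst k) * conv (\<lambda>j. - riesz2 th j) th k
   + \<i> * of_int (snd k) * conv (riesz1 th) th k"

text \<open>Solution of the regularized QG problem on [0,T] in L^infty([0,T];H^s),
  in the integral (mild) form, written coefficientwise:
  theta(t) = theta0 - int_0^t (1 + mu Lambda^(2 alpha))^(-1) div(u theta)(tau) dtau.\<close>
definition qg_sol :: "real \<Rightarrow> real \<Rightarrow> real \<Rightarrow> fcoef \<Rightarrow> real \<Rightarrow> (real \<Rightarrow> fcoef) \<Rightarrow> bool" where
  "qg_sol \<alpha> \<mu> s th0 T th \<longleftrightarrow>
     (\<forall>t\<in>{0..T}. zm_real (th t) \<and> in_Hs s (th t)) \<and>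
     (\<exists>M. \<forall>t\<in>{0..T}. hs_norm s (th t) \<le> M) \<and>
     (\<forall>t\<in>{0..T}. \<forall>k.
        set_integrable lborel {0..t}
          (\<lambda>\<tau>. qg_nonlin (th \<tau>) k / of_real (1 + \<mu> * knorm k powr (2 * \<alpha>))) \<and>
        th t k = th0 k - (LINT \<tau>:{0..t}|lborel.
          qg_nonlin (th \<tau>) k / of_real (1 + \<mu> * knorm k powr (2 * \<alpha>))))"

end

theory Submission
  imports Defs
begin

definition zsub :: "int \<times> int \<Rightarrow> int \<times> int \<Rightarrow> int \<times> int" where
  "zsub k j = (fst k - fst j, snd k - snd j)"
definition zneg :: "int \<times> int \<Rightarrow> int \<times> int" where
  "zneg k = (- fst k, - snd k)"

lemma zsub_zsub[simp]: "zsub k (zsub k j) = j"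
  by (simp add: zsub_def)
lemma bij_zsub: "bij (zsub k)"
  by (rule o_bij[of "zsub k"]) (auto simp: fun_eq_iff)
lemma inj_zsub: "inj (zsub k)"
  using bij_zsub bij_is_inj by blast
lemma zneg_zneg[simp]: "zneg (zneg k) = k"
  by (simp add: zneg_def)
lemma bij_zneg: "bij zneg"
  by (rule o_bij[of zneg]) (auto simp: fun_eq_iff)

lemma knorm_nonneg[simp]: "0 \<le> knorm k"
  by (simp add: knorm_def)
lemma knorm_cmod: "knorm k = cmod (Complex (of_int (fst k)) (of_int (snd k)))"
  unfolding knorm_def by (simp add: complex_norm)
lemma knorm_zero[simp]: "knorm (0,0) = 0"
  by (simp add: knorm_def)
lemma knorm_ge1: assumes "k \<noteq> (0,0)" shows "1 \<le> knorm k"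
proof -
  obtain a b where k: "k = (a,b)" by fastforce
  have "a \<noteq> 0 \<or> b \<noteq> 0" using assms k by auto
  hence "(1::int) \<le> a^2 + b^2"
  proof
    assume "a \<noteq> 0" hence "1 \<le> a^2" by (simp add: int_one_le_iff_zero_less)
    thus ?thesis by (smt (verit) zero_le_power2)
  next
    assume "b \<noteq> 0" hence "1 \<le> b^2" by (simp add: int_one_le_iff_zero_less)
    thus ?thesis by (smt (verit) zero_le_power2)
  qed
  hence "(1::real) \<le> real_of_int a ^ 2 + real_of_int b ^ 2"
    by (metis of_int_add of_int_le_iff of_int_1 of_int_power)
  thus ?thesis unfolding knorm_def k by simp
qed
lemma knorm_pos: assumes "k \<noteq> (0,0)" shows "0 < knorm k"
  using knorm_ge1[OF assms] by linarith
lemma knorm_tri: "knorm k \<le> knorm j + knorm (zsub k j)"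
proof -
  have e: "Complex (of_int (fst k)) (of_int (snd k)) = Complex (of_int (fst j)) (of_int (snd j)) + Complex (of_int (fst (zsub k j))) (of_int (snd (zsub k j)))"
    by (simp add: complex_eq_iff zsub_def)
  have "knorm k = cmod (Complex (of_int (fst j)) (of_int (snd j)) + Complex (of_int (fst (zsub k j))) (of_int (snd (zsub k j))))"
    unfolding knorm_cmod e ..
  also have "\<dots> \<le> cmod (Complex (of_int (fst j)) (of_int (snd j))) + cmod (Complex (of_int (fst (zsub k j))) (of_int (snd (zsub k j))))"
    by (rule norm_triangle_ineq)
  also have "\<dots> = knorm j + knorm (zsub k j)" unfolding knorm_cmod ..
  finally show ?thesis .
qed
lemma knorm_zneg[simp]: "knorm (zneg k) = knorm k"
  by (simp add: knorm_def zneg_def)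
lemma fst_le_knorm: "\<bar>real_of_int (fst k)\<bar> \<le> knorm k"
  unfolding knorm_def by (rule real_le_rsqrt) simp
lemma snd_le_knorm: "\<bar>real_of_int (snd k)\<bar> \<le> knorm k"
  unfolding knorm_def by (rule real_le_rsqrt) simp

definition wsum :: "real \<Rightarrow> (int \<times> int \<Rightarrow> real) \<Rightarrow> (int \<times> int) set \<Rightarrow> real" where
  "wsum s X F = (\<Sum>k\<in>F. knorm k powr (2 * s) * (X k)\<^sup>2)"
definition inW :: "real \<Rightarrow> (int \<times> int \<Rightarrow> real) \<Rightarrow> bool" where
  "inW s X \<longleftrightarrow> (\<lambda>k. knorm k powr (2 * s) * (X k)\<^sup>2) summable_on UNIV"
definition nW :: "real \<Rightarrow> (int \<times> int \<Rightarrow> real) \<Rightarrow> real" where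
  "nW s X = sqrt (\<Sum>\<^sub>\<infinity>k. knorm k powr (2 * s) * (X k)\<^sup>2)"

lemma in_Hs_inW: "in_Hs s f = inW s (\<lambda>k. cmod (f k))"
  by (simp add: in_Hs_def inW_def)
lemma hs_norm_nW: "hs_norm s f = nW s (\<lambda>k. cmod (f k))"
  by (simp add: hs_norm_def nW_def)

lemma wterm_nonneg: "0 \<le> knorm k powr (2 * s) * (X k)\<^sup>2"
  by simp

lemma nW_nonneg[simp]: "0 \<le> nW s X"
  unfolding nW_def by (simp add: infsum_nonneg)

lemma wsum_L2: "wsum s X F = (L2_set (\<lambda>k. knorm k powr s * X k) F)\<^sup>2"
proof -
  have "knorm k powr (2 * s) * (X k)\<^sup>2 = (knorm k powr s * X k)\<^sup>2" for k
  proof -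
    have "knorm k powr (2 * s) = knorm k powr s * knorm k powr s"
      by (simp add: powr_add[symmetric])
    thus ?thesis by (simp add: power_mult_distrib power2_eq_square)
  qed
  thus ?thesis unfolding wsum_def L2_set_def by (simp add: sum_nonneg)
qed

lemma W1: assumes "inW s X" "finite F" shows "wsum s X F \<le> (nW s X)\<^sup>2"
proof -
  have "wsum s X F \<le> (\<Sum>\<^sub>\<infinity>k. knorm k powr (2 * s) * (X k)\<^sup>2)"
    unfolding wsum_def
    by (rule finite_sum_le_infsum) (use assms in \<open>auto simp: inW_def\<close>)
  also have "\<dots> = (nW s X)\<^sup>2" unfolding nW_def
    by (simp add: infsum_nonneg)
  finally show ?thesis .
qed

lemma W2: assumes "0 \<le> M" "\<And>F. finite F \<Longrightarrow> wsum s X F \<le> M\<^sup>2"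
  shows "inW s X \<and> nW s X \<le> M"
proof -
  have sm: "inW s X" unfolding inW_def
  proof (rule nonneg_bdd_above_summable_on)
    show "bdd_above (sum (\<lambda>k. knorm k powr (2 * s) * (X k)\<^sup>2) ` {F. F \<subseteq> UNIV \<and> finite F})"
      by (rule bdd_aboveI[where M="M\<^sup>2"]) (use assms(2) in \<open>auto simp: wsum_def\<close>)
  qed simp
  have "(\<Sum>\<^sub>\<infinity>k. knorm k powr (2 * s) * (X k)\<^sup>2) \<le> M\<^sup>2"
    by (rule infsum_le_finite_sums) (use sm assms(2) in \<open>auto simp: inW_def wsum_def\<close>)
  hence "nW s X \<le> sqrt (M\<^sup>2)" unfolding nW_def by (rule real_sqrt_le_mono)
  with assms show ?thesis using sm by simp
qed

lemma L2_le_nW: assumes "inW s X" "finite F" shows "L2_set (\<lambda>k. knorm k powr s * X k) F \<le> nW s X"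
proof -
  have "(L2_set (\<lambda>k. knorm k powr s * X k) F)\<^sup>2 \<le> (nW s X)\<^sup>2"
    using W1[OF assms] by (simp add: wsum_L2)
  thus ?thesis by (rule power2_le_imp_le) simp
qed

lemma W_tri: assumes "inW s X" "inW s Y" "\<And>k. \<bar>Z k\<bar> \<le> \<bar>X k\<bar> + \<bar>Y k\<bar>"
  shows "inW s Z \<and> nW s Z \<le> nW s X + nW s Y"
proof (rule W2)
  fix F :: "(int \<times> int) set" assume F: "finite F"
  have "L2_set (\<lambda>k. knorm k powr s * Z k) F = L2_set (\<lambda>k. \<bar>knorm k powr s * Z k\<bar>) F"
    by (simp add: L2_set_def)
  also have "\<dots> \<le> L2_set (\<lambda>k. \<bar>knorm k powr s * X k\<bar> + \<bar>knorm k powr s * Y k\<bar>) F"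
  proof (rule L2_set_mono)
    fix k
    have "\<bar>knorm k powr s * Z k\<bar> = knorm k powr s * \<bar>Z k\<bar>" by (simp add: abs_mult)
    also have "\<dots> \<le> knorm k powr s * (\<bar>X k\<bar> + \<bar>Y k\<bar>)" by (rule mult_left_mono[OF assms(3)]) simp
    also have "\<dots> = \<bar>knorm k powr s * X k\<bar> + \<bar>knorm k powr s * Y k\<bar>" by (simp add: abs_mult distrib_left)
    finally show "\<bar>knorm k powr s * Z k\<bar> \<le> \<bar>knorm k powr s * X k\<bar> + \<bar>knorm k powr s * Y k\<bar>" .
  qed simp
  also have "\<dots> \<le> L2_set (\<lambda>k. \<bar>knorm k powr s * X k\<bar>) F + L2_set (\<lambda>k. \<bar>knorm k powr s * Y k\<bar>) F"
    by (rule L2_set_triangle_ineq)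
  also have "\<dots> = L2_set (\<lambda>k. knorm k powr s * X k) F + L2_set (\<lambda>k. knorm k powr s * Y k) F"
    by (simp add: L2_set_def)
  also have "\<dots> \<le> nW s X + nW s Y"
    using L2_le_nW[OF assms(1) F] L2_le_nW[OF assms(2) F] by simp
  finally show "wsum s Z F \<le> (nW s X + nW s Y)\<^sup>2" unfolding wsum_L2
    by (intro power_mono) simp_all
qed simp

lemma W_scale: assumes "inW s X" "0 \<le> c" "\<And>k. \<bar>Z k\<bar> \<le> c * \<bar>X k\<bar>"
  shows "inW s Z \<and> nW s Z \<le> c * nW s X"
proof (rule W2)
  fix F :: "(int \<times> int) set" assume F: "finite F"
  have "L2_set (\<lambda>k. knorm k powr s * Z k) F = L2_set (\<lambda>k. \<bar>knorm k powr s * Z k\<bar>) F"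
    by (simp add: L2_set_def)
  also have "\<dots> \<le> L2_set (\<lambda>k. c * \<bar>knorm k powr s * X k\<bar>) F"
  proof (rule L2_set_mono)
    fix k
    have "\<bar>knorm k powr s * Z k\<bar> = knorm k powr s * \<bar>Z k\<bar>" by (simp add: abs_mult)
    also have "\<dots> \<le> knorm k powr s * (c * \<bar>X k\<bar>)" by (rule mult_left_mono[OF assms(3)]) simp
    also have "\<dots> = c * \<bar>knorm k powr s * X k\<bar>" by (simp add: abs_mult)
    finally show "\<bar>knorm k powr s * Z k\<bar> \<le> c * \<bar>knorm k powr s * X k\<bar>" .
  qed simp
  also have "\<dots> = c * L2_set (\<lambda>k. knorm k powr s * X k) F"
    using assms(2) by (simp add: L2_set_right_distrib[symmetric]) (simp add: L2_set_def)
  also have "\<dots> \<le> c * nW s X"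
    using L2_le_nW[OF assms(1) F] assms(2) by (simp add: mult_left_mono)
  finally show "wsum s Z F \<le> (c * nW s X)\<^sup>2" unfolding wsum_L2
    by (intro power_mono) simp_all
qed (use assms in simp)

lemma W_coef: assumes "inW s X" "k \<noteq> (0,0)" "0 \<le> s" shows "\<bar>X k\<bar> \<le> nW s X"
proof -
  have "L2_set (\<lambda>k. knorm k powr s * X k) {k} \<le> nW s X" by (rule L2_le_nW[OF assms(1)]) simp
  moreover have "L2_set (\<lambda>k. knorm k powr s * X k) {k} = knorm k powr s * \<bar>X k\<bar>"
    by (simp add: abs_mult)
  moreover have "1 \<le> knorm k powr s" using knorm_ge1[OF assms(2)] assms(3)
    by (simp add: ge_one_powr_ge_zero)
  ultimately have "1 * \<bar>X k\<bar> \<le> knorm k powr s * \<bar>X k\<bar>"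
    by (intro mult_right_mono) auto
  with \<open>L2_set _ {k} \<le> _\<close> \<open>L2_set _ {k} = _\<close> show ?thesis by linarith
qed

lemma W_fatou: assumes "\<And>k. (\<lambda>n. Xn n k) \<longlonglongrightarrow> X k" "\<And>n. inW s (Xn n)" "\<And>n. nW s (Xn n) \<le> M"
  shows "inW s X \<and> nW s X \<le> M"
proof (rule W2)
  show "0 \<le> M" using assms(3)[of 0] nW_nonneg order.trans by blast
  fix F :: "(int \<times> int) set" assume F: "finite F"
  have "(\<lambda>n. wsum s (Xn n) F) \<longlonglongrightarrow> wsum s X F"
    unfolding wsum_def by (intro tendsto_intros assms(1))
  moreover have "wsum s (Xn n) F \<le> M\<^sup>2" for n
  proof -
    have "(nW s (Xn n))\<^sup>2 \<le> M\<^sup>2" by (rule power_mono[OF assms(3)]) simp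
    thus ?thesis using W1[OF assms(2) F, of n] by linarith
  qed
  ultimately show "wsum s X F \<le> M\<^sup>2" using LIMSEQ_le_const2 by blast
qed

lemma W_zero: "inW s (\<lambda>k. 0) \<and> nW s (\<lambda>k. 0) = 0"
  by (simp add: inW_def nW_def)

lemma summable_shift_powr: assumes "1 < s" shows "summable (\<lambda>n::nat. (1 + real n) powr (- s))"
proof -
  have "summable (\<lambda>n::nat. real n powr (- s))" using assms by (simp add: summable_real_powr_iff)
  hence "summable (\<lambda>n::nat. real (Suc n) powr (- s))" by (subst summable_Suc_iff)
  thus ?thesis by simp
qed

lemma sum1d:
  assumes "1 < s" "finite A"
  shows "(\<Sum>m\<in>A. (1 + real_of_int \<bar>m\<bar>) powr (- s)) \<le> 2 * (\<Sum>n. (1 + real n) powr (- s))"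
proof -
  define h where "h n = (1 + real n) powr (- s)" for n :: nat
  have hs: "summable h" unfolding h_def by (rule summable_shift_powr[OF assms(1)])
  have hnn: "0 \<le> h n" for n unfolding h_def by simp
  define A1 where "A1 = {m\<in>A. 0 \<le> m}"
  define A2 where "A2 = {m\<in>A. m < 0}"
  have A12: "A = A1 \<union> A2" "A1 \<inter> A2 = {}" unfolding A1_def A2_def by auto
  have fin: "finite A1" "finite A2" using assms(2) unfolding A1_def A2_def by auto
  have "(\<Sum>m\<in>A1. (1 + real_of_int \<bar>m\<bar>) powr (- s)) = (\<Sum>m\<in>A1. h (nat m))"
    by (rule sum.cong) (auto simp: A1_def h_def)
  also have "\<dots> = sum h (nat ` A1)"
  proof -
    have "inj_on nat A1" by (auto simp: A1_def inj_on_def)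
    thus ?thesis by (simp add: sum.reindex)
  qed
  also have "\<dots> \<le> suminf h" by (rule sum_le_suminf[OF hs]) (use fin hnn in auto)
  finally have s1: "(\<Sum>m\<in>A1. (1 + real_of_int \<bar>m\<bar>) powr (- s)) \<le> suminf h" .
  have "(\<Sum>m\<in>A2. (1 + real_of_int \<bar>m\<bar>) powr (- s)) = (\<Sum>m\<in>A2. h (nat (- m)))"
    by (rule sum.cong) (auto simp: A2_def h_def)
  also have "\<dots> = sum h ((\<lambda>m. nat (- m)) ` A2)"
  proof -
    have "inj_on (\<lambda>m. nat (- m)) A2" by (auto simp: A2_def inj_on_def)
    thus ?thesis by (simp add: sum.reindex)
  qed
  also have "\<dots> \<le> suminf h" by (rule sum_le_suminf[OF hs]) (use fin hnn in auto)
  finally have s2: "(\<Sum>m\<in>A2. (1 + real_of_int \<bar>m\<bar>) powr (- s)) \<le> suminf h" .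
  have "(\<Sum>m\<in>A. (1 + real_of_int \<bar>m\<bar>) powr (- s)) =
     (\<Sum>m\<in>A1. (1 + real_of_int \<bar>m\<bar>) powr (- s)) + (\<Sum>m\<in>A2. (1 + real_of_int \<bar>m\<bar>) powr (- s))"
    unfolding A12(1) by (rule sum.union_disjoint[OF fin A12(2)])
  with s1 s2 show ?thesis unfolding h_def by linarith
qed

lemma knorm_powr_bound:
  assumes "0 \<le> s" "k \<noteq> (0,0)"
  shows "knorm k powr (- 2 * s) \<le> 4 powr s * ((1 + real_of_int \<bar>fst k\<bar>) powr (- s) * (1 + real_of_int \<bar>snd k\<bar>) powr (- s))"
proof -
  obtain m n where k: "k = (m, n)" by fastforce
  define q where "q = real_of_int m ^ 2 + real_of_int n ^ 2"
  have q1: "1 \<le> q" using knorm_ge1[OF assms(2)] unfolding knorm_def q_def k by simp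
  have kn: "knorm k = sqrt q" unfolding knorm_def q_def k by simp
  have "knorm k powr (- 2 * s) = (q powr (1/2)) powr (- 2 * s)" using q1 by (simp add: kn powr_half_sqrt)
  also have "\<dots> = q powr (- s)" by (simp add: powr_powr)
  finally have e1: "knorm k powr (- 2 * s) = q powr (- s)" .
  define p where "p = (1 + real_of_int \<bar>m\<bar>) * (1 + real_of_int \<bar>n\<bar>)"
  have mm: "\<bar>real_of_int m\<bar> \<le> real_of_int m ^ 2"
  proof (cases "m = 0")
    case False hence "1 \<le> \<bar>m\<bar>" by simp
    hence "\<bar>m\<bar> * 1 \<le> \<bar>m\<bar> * \<bar>m\<bar>" by (intro mult_left_mono) auto
    hence "\<bar>m\<bar> \<le> m ^ 2" by (simp add: power2_eq_square abs_mult[symmetric])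
    thus ?thesis by (metis of_int_abs of_int_le_iff of_int_power)
  qed simp
  have nn: "\<bar>real_of_int n\<bar> \<le> real_of_int n ^ 2"
  proof (cases "n = 0")
    case False hence "1 \<le> \<bar>n\<bar>" by simp
    hence "\<bar>n\<bar> * 1 \<le> \<bar>n\<bar> * \<bar>n\<bar>" by (intro mult_left_mono) auto
    hence "\<bar>n\<bar> \<le> n ^ 2" by (simp add: power2_eq_square abs_mult[symmetric])
    thus ?thesis by (metis of_int_abs of_int_le_iff of_int_power)
  qed simp
  have mn: "\<bar>real_of_int m\<bar> * \<bar>real_of_int n\<bar> \<le> q"
  proof -
    have "0 \<le> (\<bar>real_of_int m\<bar> - \<bar>real_of_int n\<bar>)^2" by simp
    hence "2 * (\<bar>real_of_int m\<bar> * \<bar>real_of_int n\<bar>) \<le> q" unfolding q_def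
      by (simp add: power2_eq_square algebra_simps)
    moreover have "0 \<le> \<bar>real_of_int m\<bar> * \<bar>real_of_int n\<bar>" by simp
    ultimately show ?thesis by linarith
  qed
  have p4: "p \<le> 4 * q" unfolding p_def
    using mm nn mn q1 unfolding q_def by (simp add: algebra_simps)
  have p1: "1 \<le> p" unfolding p_def
  proof -
    have "1 * 1 \<le> (1 + \<bar>real_of_int m\<bar>) * (1 + \<bar>real_of_int n\<bar>)" by (intro mult_mono) auto
    thus "1 \<le> (1 + real_of_int \<bar>m\<bar>) * (1 + real_of_int \<bar>n\<bar>)" by simp
  qed
  have "q powr (- s) \<le> (p / 4) powr (- s)"
    by (rule powr_mono2') (use assms(1) p4 p1 in auto)
  also have "(p / 4) powr (- s) = 4 powr s * p powr (- s)"
    using p1 by (simp add: powr_divide powr_minus divide_simps)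
  also have "p powr (- s) = (1 + real_of_int \<bar>m\<bar>) powr (- s) * (1 + real_of_int \<bar>n\<bar>) powr (- s)"
    unfolding p_def by (rule powr_mult)
  finally show ?thesis using e1 k by simp
qed

lemma lattice_sum:
  assumes "1 < s"
  shows "\<exists>Z\<ge>0. \<forall>F. finite F \<longrightarrow> (\<Sum>k\<in>F - {(0,0)}. knorm k powr (- 2 * s)) \<le> Z"
proof (intro exI[of _ "4 powr s * (2 * (\<Sum>n. (1 + real n) powr (- s)))^2"] conjI allI impI)
  define S where "S = 2 * (\<Sum>n. (1 + real n) powr (- s))"
  define g where "g m = (1 + real_of_int \<bar>m\<bar>) powr (- s)" for m :: int
  have gnn: "0 \<le> g m" for m unfolding g_def by simp
  have S0: "0 \<le> S" unfolding S_def using summable_shift_powr[OF assms]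
    by (simp add: suminf_nonneg)
  thus "0 \<le> 4 powr s * (2 * (\<Sum>n. (1 + real n) powr (- s)))^2" unfolding S_def by simp
  fix F :: "(int \<times> int) set" assume F: "finite F"
  have "(\<Sum>k\<in>F - {(0,0)}. knorm k powr (- 2 * s)) \<le> (\<Sum>k\<in>F - {(0,0)}. 4 powr s * (g (fst k) * g (snd k)))"
    by (rule sum_mono) (use assms knorm_powr_bound in \<open>auto simp: g_def\<close>)
  also have "\<dots> \<le> (\<Sum>k\<in>fst ` F \<times> snd ` F. 4 powr s * (g (fst k) * g (snd k)))"
    by (rule sum_mono2) (use F gnn in \<open>auto intro: rev_image_eqI\<close>)
  also have "\<dots> = 4 powr s * ((\<Sum>a\<in>fst ` F. g a) * (\<Sum>b\<in>snd ` F. g b))"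
  proof -
    have "(\<Sum>a\<in>fst ` F. \<Sum>b\<in>snd ` F. g a * g b) = (\<Sum>k\<in>fst ` F \<times> snd ` F. g (fst k) * g (snd k))"
      by (simp add: sum.cartesian_product case_prod_unfold)
    thus ?thesis by (simp add: sum_distrib_left[symmetric] sum_product)
  qed
  also have "\<dots> \<le> 4 powr s * (S * S)"
  proof -
    have "(\<Sum>a\<in>fst ` F. g a) \<le> S" unfolding g_def S_def by (rule sum1d[OF assms]) (use F in simp)
    moreover have "(\<Sum>a\<in>snd ` F. g a) \<le> S" unfolding g_def S_def by (rule sum1d[OF assms]) (use F in simp)
    moreover have "0 \<le> (\<Sum>a\<in>fst ` F. g a)" "0 \<le> (\<Sum>a\<in>snd ` F. g a)" by (simp_all add: gnn sum_nonneg)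
    ultimately show ?thesis by (intro mult_left_mono mult_mono) auto
  qed
  finally show "(\<Sum>k\<in>F - {(0,0)}. knorm k powr (- 2 * s)) \<le> 4 powr s * (2 * (\<Sum>n. (1 + real n) powr (- s)))^2"
    unfolding S_def by (simp add: power2_eq_square)
qed

lemma sq_powr: "(a powr x)\<^sup>2 = a powr (2 * (x::real))"
proof -
  have "a powr (2 * x) = a powr x * a powr x" by (simp add: powr_add[symmetric])
  thus ?thesis by (simp add: power2_eq_square)
qed

definition lat :: "real \<Rightarrow> real \<Rightarrow> bool" where
  "lat s Z \<longleftrightarrow> (\<forall>F. finite F \<longrightarrow> (\<Sum>k\<in>F - {(0,0)}. knorm k powr (- 2 * s)) \<le> Z)"

lemma l1_bound:
  assumes "lat s Z" "inW s X" "X (0,0) = 0" "finite J"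
  shows "(\<Sum>k\<in>J. \<bar>X k\<bar>) \<le> sqrt Z * nW s X"
proof -
  have "(\<Sum>k\<in>J. \<bar>X k\<bar>) = (\<Sum>k\<in>J - {(0,0)}. \<bar>X k\<bar>)"
    using assms(3,4) by (intro sum.mono_neutral_right) auto
  also have "\<dots> = (\<Sum>k\<in>J - {(0,0)}. \<bar>knorm k powr (- s)\<bar> * \<bar>knorm k powr s * X k\<bar>)"
  proof (rule sum.cong[OF refl])
    fix k assume "k \<in> J - {(0,0)}"
    hence "0 < knorm k" using knorm_pos[of k] by auto
    hence "knorm k powr (- s) * knorm k powr s = 1" by (simp add: powr_minus)
    thus "\<bar>X k\<bar> = \<bar>knorm k powr (- s)\<bar> * \<bar>knorm k powr s * X k\<bar>"
      by (simp add: abs_mult mult.assoc[symmetric])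
  qed
  also have "\<dots> \<le> L2_set (\<lambda>k. knorm k powr (- s)) (J - {(0,0)}) * L2_set (\<lambda>k. knorm k powr s * X k) (J - {(0,0)})"
    by (rule L2_set_mult_ineq)
  also have "\<dots> \<le> sqrt Z * nW s X"
  proof (rule mult_mono)
    have "L2_set (\<lambda>k. knorm k powr (- s)) (J - {(0,0)}) = sqrt (\<Sum>k\<in>J - {(0,0)}. knorm k powr (- 2 * s))"
      unfolding L2_set_def by (simp add: sq_powr)
    also have "\<dots> \<le> sqrt Z" using assms(1,4) unfolding lat_def by (simp add: real_sqrt_le_mono)
    finally show "L2_set (\<lambda>k. knorm k powr (- s)) (J - {(0,0)}) \<le> sqrt Z" .
    show "L2_set (\<lambda>k. knorm k powr s * X k) (J - {(0,0)}) \<le> nW s X"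
      by (rule L2_le_nW[OF assms(2)]) (use assms(4) in simp)
    show "0 \<le> sqrt Z" using assms(1) unfolding lat_def by (metis finite.emptyI empty_Diff sum.empty real_sqrt_ge_zero)
  qed simp
  finally show ?thesis .
qed

lemma l2_bound:
  assumes "0 \<le> s" "inW s X" "X (0,0) = 0" "finite J"
  shows "(\<Sum>k\<in>J. (X k)\<^sup>2) \<le> (nW s X)\<^sup>2"
proof -
  have "(\<Sum>k\<in>J. (X k)\<^sup>2) \<le> wsum s X J" unfolding wsum_def
  proof (rule sum_mono)
    fix k assume "k \<in> J"
    show "(X k)\<^sup>2 \<le> knorm k powr (2 * s) * (X k)\<^sup>2"
    proof (cases "k = (0,0)")
      case False
      have "1 \<le> knorm k powr (2 * s)" using knorm_ge1[OF False] assms(1) by (simp add: ge_one_powr_ge_zero)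
      hence "1 * (X k)\<^sup>2 \<le> knorm k powr (2 * s) * (X k)\<^sup>2" by (intro mult_right_mono) auto
      thus ?thesis by simp
    qed (use assms(3) in simp)
  qed
  also have "\<dots> \<le> (nW s X)\<^sup>2" by (rule W1[OF assms(2,4)])
  finally show ?thesis .
qed

lemma infsum_fsum:
  fixes f :: "'i \<Rightarrow> 'a \<Rightarrow> real"
  assumes "finite F" "\<And>i. i \<in> F \<Longrightarrow> f i summable_on A"
  shows "(\<lambda>x. \<Sum>i\<in>F. f i x) summable_on A \<and> infsum (\<lambda>x. \<Sum>i\<in>F. f i x) A = (\<Sum>i\<in>F. infsum (f i) A)"
  using assms
proof (induction F rule: finite_induct)
  case empty thus ?case by simp
next
  case (insert i F)
  have a: "f i summable_on A" using insert.prems by simp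
  have b: "(\<lambda>x. \<Sum>i\<in>F. f i x) summable_on A \<and> infsum (\<lambda>x. \<Sum>i\<in>F. f i x) A = (\<Sum>i\<in>F. infsum (f i) A)"
    using insert.IH insert.prems by simp
  show ?case using insert.hyps a b by (simp add: summable_on_add infsum_add)
qed

lemma summ_bound:
  fixes f :: "'a \<Rightarrow> real"
  assumes "\<And>x. 0 \<le> f x" "\<And>J. finite J \<Longrightarrow> sum f J \<le> B"
  shows "f summable_on UNIV \<and> infsum f UNIV \<le> B"
proof -
  have sm: "f summable_on UNIV"
  proof (rule nonneg_bdd_above_summable_on)
    show "bdd_above (sum f ` {F. F \<subseteq> UNIV \<and> finite F})"
      by (rule bdd_aboveI[where M=B]) (use assms(2) in auto)
  qed (use assms(1) in simp)
  moreover have "infsum f UNIV \<le> B" by (rule infsum_le_finite_sums[OF sm]) (use assms(2) in simp)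
  ultimately show ?thesis by simp
qed

lemma fsum_le_infsum:
  fixes f :: "'a \<Rightarrow> real"
  assumes "f summable_on UNIV" "\<And>x. 0 \<le> f x" "finite J"
  shows "sum f J \<le> infsum f UNIV"
  by (rule finite_sum_le_infsum) (use assms in auto)

lemma sum_zsub_le:
  fixes Y :: "int \<times> int \<Rightarrow> real"
  assumes "\<And>J. finite J \<Longrightarrow> sum Y J \<le> B" "finite J"
  shows "(\<Sum>j\<in>J. Y (zsub k j)) \<le> B" "(\<Sum>j\<in>J. Y (zsub j k)) \<le> B"
proof -
  have "(\<Sum>j\<in>J. Y (zsub k j)) = sum Y (zsub k ` J)"
    using inj_zsub[of k] by (simp add: sum.reindex inj_on_subset[of _ UNIV])
  also have "\<dots> \<le> B" using assms by simp
  finally show "(\<Sum>j\<in>J. Y (zsub k j)) \<le> B" .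
  have ij: "inj (\<lambda>j. zsub j k)" by (rule injI) (auto simp: zsub_def prod_eq_iff)
  have "(\<Sum>j\<in>J. Y (zsub j k)) = sum Y ((\<lambda>j. zsub j k) ` J)"
    using ij by (simp add: sum.reindex inj_on_subset[of _ UNIV])
  also have "\<dots> \<le> B" using assms by simp
  finally show "(\<Sum>j\<in>J. Y (zsub j k)) \<le> B" .
qed

lemma young:
  fixes X Y :: "int \<times> int \<Rightarrow> real"
  assumes X0: "\<And>j. 0 \<le> X j" and Y0: "\<And>j. 0 \<le> Y j"
    and XA: "\<And>J. finite J \<Longrightarrow> (\<Sum>j\<in>J. (X j)\<^sup>2) \<le> A"
    and YB: "\<And>J. finite J \<Longrightarrow> (\<Sum>j\<in>J. Y j) \<le> B"
  shows "(\<lambda>j. X j * Y (zsub k j)) summable_on UNIV"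
    and "finite F \<Longrightarrow> (\<Sum>k\<in>F. (\<Sum>\<^sub>\<infinity>j. X j * Y (zsub k j))\<^sup>2) \<le> A * B\<^sup>2"
proof -
  have A0: "0 \<le> A" using XA[of "{}"] by simp
  have B0: "0 \<le> B" using YB[of "{}"] by simp
  have Yle: "Y i \<le> B" for i using YB[of "{i}"] by simp
  have Usm: "(\<lambda>j. (X j)\<^sup>2 * Y (zsub k j)) summable_on UNIV" for k
  proof -
    have "(\<lambda>j. (X j)\<^sup>2 * Y (zsub k j)) summable_on UNIV \<and> infsum (\<lambda>j. (X j)\<^sup>2 * Y (zsub k j)) UNIV \<le> A * B"
    proof (rule summ_bound)
      fix J :: "(int \<times> int) set" assume J: "finite J"
      have "(\<Sum>j\<in>J. (X j)\<^sup>2 * Y (zsub k j)) \<le> (\<Sum>j\<in>J. (X j)\<^sup>2 * B)"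
        by (rule sum_mono, rule mult_left_mono) (simp_all add: Yle)
      also have "\<dots> = (\<Sum>j\<in>J. (X j)\<^sup>2) * B" by (simp add: sum_distrib_right)
      also have "\<dots> \<le> A * B" by (rule mult_right_mono[OF XA[OF J] B0])
      finally show "(\<Sum>j\<in>J. (X j)\<^sup>2 * Y (zsub k j)) \<le> A * B" .
    qed (simp add: Y0)
    thus ?thesis by simp
  qed
  define U where "U k = (\<Sum>\<^sub>\<infinity>j. (X j)\<^sup>2 * Y (zsub k j))" for k
  have U0: "0 \<le> U k" for k unfolding U_def by (rule infsum_nonneg) (simp add: Y0)
  have ck: "(\<lambda>j. X j * Y (zsub k j)) summable_on UNIV \<and> (\<Sum>\<^sub>\<infinity>j. X j * Y (zsub k j)) \<le> sqrt (U k * B)" for k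
  proof (rule summ_bound)
    fix J :: "(int \<times> int) set" assume J: "finite J"
    have "(\<Sum>j\<in>J. X j * Y (zsub k j)) = (\<Sum>j\<in>J. \<bar>X j * sqrt (Y (zsub k j))\<bar> * \<bar>sqrt (Y (zsub k j))\<bar>)"
      by (rule sum.cong[OF refl]) (simp add: abs_mult X0 Y0 mult.assoc)
    also have "\<dots> \<le> L2_set (\<lambda>j. X j * sqrt (Y (zsub k j))) J * L2_set (\<lambda>j. sqrt (Y (zsub k j))) J"
      by (rule L2_set_mult_ineq)
    also have "L2_set (\<lambda>j. X j * sqrt (Y (zsub k j))) J = sqrt (\<Sum>j\<in>J. (X j)\<^sup>2 * Y (zsub k j))"
      unfolding L2_set_def by (simp add: power_mult_distrib Y0)
    also have "L2_set (\<lambda>j. sqrt (Y (zsub k j))) J = sqrt (\<Sum>j\<in>J. Y (zsub k j))"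
      unfolding L2_set_def by (simp add: Y0)
    also have "sqrt (\<Sum>j\<in>J. (X j)\<^sup>2 * Y (zsub k j)) * sqrt (\<Sum>j\<in>J. Y (zsub k j)) \<le> sqrt (U k) * sqrt B"
    proof (rule mult_mono)
      show "sqrt (\<Sum>j\<in>J. (X j)\<^sup>2 * Y (zsub k j)) \<le> sqrt (U k)" unfolding U_def
        by (rule real_sqrt_le_mono, rule fsum_le_infsum[OF Usm]) (simp_all add: Y0 J)
      show "sqrt (\<Sum>j\<in>J. Y (zsub k j)) \<le> sqrt B"
        by (rule real_sqrt_le_mono, rule sum_zsub_le(1)[OF YB J])
    qed (simp_all add: U0 sum_nonneg Y0)
    finally show "(\<Sum>j\<in>J. X j * Y (zsub k j)) \<le> sqrt (U k * B)" by (simp add: real_sqrt_mult)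
  qed (simp add: X0 Y0)
  thus "(\<lambda>j. X j * Y (zsub k j)) summable_on UNIV" by simp
  assume F: "finite F"
  have "(\<Sum>k\<in>F. (\<Sum>\<^sub>\<infinity>j. X j * Y (zsub k j))\<^sup>2) \<le> (\<Sum>k\<in>F. U k * B)"
  proof (rule sum_mono)
    fix k
    have c0: "0 \<le> (\<Sum>\<^sub>\<infinity>j. X j * Y (zsub k j))" by (rule infsum_nonneg) (simp add: X0 Y0)
    have "(\<Sum>\<^sub>\<infinity>j. X j * Y (zsub k j))\<^sup>2 \<le> (sqrt (U k * B))\<^sup>2"
      by (rule power_mono) (use ck[of k] c0 in auto)
    thus "(\<Sum>\<^sub>\<infinity>j. X j * Y (zsub k j))\<^sup>2 \<le> U k * B" using U0[of k] B0 by simp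
  qed
  also have "\<dots> = (\<Sum>k\<in>F. U k) * B" by (simp add: sum_distrib_right)
  also have "(\<Sum>k\<in>F. U k) \<le> A * B"
  proof -
    have fs: "(\<lambda>j. \<Sum>k\<in>F. (X j)\<^sup>2 * Y (zsub k j)) summable_on UNIV \<and>
      infsum (\<lambda>j. \<Sum>k\<in>F. (X j)\<^sup>2 * Y (zsub k j)) UNIV = (\<Sum>k\<in>F. infsum (\<lambda>j. (X j)\<^sup>2 * Y (zsub k j)) UNIV)"
      by (rule infsum_fsum[OF F]) (rule Usm)
    have "infsum (\<lambda>j. \<Sum>k\<in>F. (X j)\<^sup>2 * Y (zsub k j)) UNIV \<le> A * B"
    proof (rule infsum_le_finite_sums)
      show "(\<lambda>j. \<Sum>k\<in>F. (X j)\<^sup>2 * Y (zsub k j)) summable_on UNIV" using fs by simp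
      fix J :: "(int \<times> int) set" assume J: "finite J"
      have "(\<Sum>j\<in>J. \<Sum>k\<in>F. (X j)\<^sup>2 * Y (zsub k j)) = (\<Sum>j\<in>J. (X j)\<^sup>2 * (\<Sum>k\<in>F. Y (zsub k j)))"
        by (simp add: sum_distrib_left)
      also have "\<dots> \<le> (\<Sum>j\<in>J. (X j)\<^sup>2 * B)"
        by (rule sum_mono, rule mult_left_mono) (simp_all add: sum_zsub_le(2)[OF YB F])
      also have "\<dots> = (\<Sum>j\<in>J. (X j)\<^sup>2) * B" by (simp add: sum_distrib_right)
      also have "\<dots> \<le> A * B" by (rule mult_right_mono[OF XA[OF J] B0])
      finally show "(\<Sum>j\<in>J. \<Sum>k\<in>F. (X j)\<^sup>2 * Y (zsub k j)) \<le> A * B" .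
    qed
    thus ?thesis using fs unfolding U_def by simp
  qed
  hence "(\<Sum>k\<in>F. U k) * B \<le> A * B * B" by (rule mult_right_mono[OF _ B0])
  finally show "(\<Sum>k\<in>F. (\<Sum>\<^sub>\<infinity>j. X j * Y (zsub k j))\<^sup>2) \<le> A * B\<^sup>2"
    by (simp add: power2_eq_square mult.assoc)
qed

lemma weight_ineq:
  assumes "0 \<le> s"
  shows "knorm k powr s \<le> 2 powr s * (knorm j powr s + knorm (zsub k j) powr s)"
proof -
  define M where "M = max (knorm j) (knorm (zsub k j))"
  have M0: "0 \<le> M" unfolding M_def by (simp add: le_max_iff_disj)
  have "knorm k \<le> 2 * M" using knorm_tri[of k j] unfolding M_def by linarith
  hence "knorm k powr s \<le> (2 * M) powr s" by (rule powr_mono2[OF assms knorm_nonneg])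
  also have "\<dots> = 2 powr s * M powr s" using M0 by (simp add: powr_mult)
  also have "M powr s \<le> knorm j powr s + knorm (zsub k j) powr s" unfolding M_def
    by (cases "knorm j \<le> knorm (zsub k j)") (simp_all add: max_def)
  hence "2 powr s * M powr s \<le> 2 powr s * (knorm j powr s + knorm (zsub k j) powr s)"
    by (rule mult_left_mono) simp
  finally show ?thesis .
qed

lemma wa_bound:
  assumes "inW s X" "finite J"
  shows "(\<Sum>j\<in>J. (knorm j powr s * X j)\<^sup>2) \<le> (nW s X)\<^sup>2"
proof -
  have "(\<Sum>j\<in>J. (knorm j powr s * X j)\<^sup>2) = wsum s X J"
    unfolding wsum_def by (simp add: power_mult_distrib sq_powr)
  thus ?thesis using W1[OF assms] by simp
qed

lemma alg:
  fixes a b :: "int \<times> int \<Rightarrow> real"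
  assumes s: "1 < s" and Z: "lat s Z" and a0: "\<And>j. 0 \<le> a j" and b0: "\<And>j. 0 \<le> b j"
    and ia: "inW s a" and ib: "inW s b" and az: "a (0,0) = 0" and bz: "b (0,0) = 0"
  shows "(\<lambda>j. a j * b (zsub k j)) summable_on UNIV"
    and "inW s (\<lambda>k. \<Sum>\<^sub>\<infinity>j. a j * b (zsub k j))"
    and "nW s (\<lambda>k. \<Sum>\<^sub>\<infinity>j. a j * b (zsub k j)) \<le> 2 powr (s + 1) * sqrt Z * nW s a * nW s b"
proof -
  define w where "w j = knorm j powr s" for j
  have w0: "0 \<le> w j" for j unfolding w_def by simp
  have s0: "0 \<le> s" using s by simp
  have Z0: "0 \<le> Z" using Z unfolding lat_def by (metis finite.emptyI empty_Diff sum.empty)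
  have XAa: "(\<Sum>j\<in>J. (a j)\<^sup>2) \<le> (nW s a)\<^sup>2" if "finite J" for J by (rule l2_bound[OF s0 ia az that])
  have XAb: "(\<Sum>j\<in>J. (b j)\<^sup>2) \<le> (nW s b)\<^sup>2" if "finite J" for J by (rule l2_bound[OF s0 ib bz that])
  have YBa: "(\<Sum>j\<in>J. a j) \<le> sqrt Z * nW s a" if "finite J" for J
    using l1_bound[OF Z ia az that] a0 by simp
  have YBb: "(\<Sum>j\<in>J. b j) \<le> sqrt Z * nW s b" if "finite J" for J
    using l1_bound[OF Z ib bz that] b0 by simp
  have XAwa: "(\<Sum>j\<in>J. (w j * a j)\<^sup>2) \<le> (nW s a)\<^sup>2" if "finite J" for J
    unfolding w_def by (rule wa_bound[OF ia that])
  have XAwb: "(\<Sum>j\<in>J. (w j * b j)\<^sup>2) \<le> (nW s b)\<^sup>2" if "finite J" for J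
    unfolding w_def by (rule wa_bound[OF ib that])
  have wa0: "0 \<le> w j * a j" for j using w0 a0 by simp
  have wb0: "0 \<le> w j * b j" for j using w0 b0 by simp
  have Y1: "(\<lambda>j. a j * b (zsub k j)) summable_on UNIV" for k
    by (rule young(1)[where X=a and Y=b and A="(nW s a)\<^sup>2" and B="sqrt Z * nW s b"])
      (auto intro: a0 b0 XAa YBb)
  have Y2: "(\<lambda>j. (w j * a j) * b (zsub k j)) summable_on UNIV"
    "finite F \<Longrightarrow> (\<Sum>k\<in>F. (\<Sum>\<^sub>\<infinity>j. (w j * a j) * b (zsub k j))\<^sup>2) \<le> (nW s a)\<^sup>2 * (sqrt Z * nW s b)\<^sup>2" for k F
    by (rule young[where X="\<lambda>j. w j * a j" and Y=b and A="(nW s a)\<^sup>2" and B="sqrt Z * nW s b"];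
        auto intro: wa0 b0 XAwa YBb)+
  have Y3: "(\<lambda>j. (w j * b j) * a (zsub k j)) summable_on UNIV"
    "finite F \<Longrightarrow> (\<Sum>k\<in>F. (\<Sum>\<^sub>\<infinity>j. (w j * b j) * a (zsub k j))\<^sup>2) \<le> (nW s b)\<^sup>2 * (sqrt Z * nW s a)\<^sup>2" for k F
    by (rule young[where X="\<lambda>j. w j * b j" and Y=a and A="(nW s b)\<^sup>2" and B="sqrt Z * nW s a"];
        auto intro: wb0 a0 XAwb YBa)+
  show sm: "(\<lambda>j. a j * b (zsub k j)) summable_on UNIV" for k by (rule Y1)
  define P where "P k = (\<Sum>\<^sub>\<infinity>j. a j * b (zsub k j))" for k
  define c1 where "c1 k = (\<Sum>\<^sub>\<infinity>j. (w j * a j) * b (zsub k j))" for k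
  define c2 where "c2 k = (\<Sum>\<^sub>\<infinity>j. (w j * b j) * a (zsub k j))" for k
  have P0: "0 \<le> P k" for k unfolding P_def by (rule infsum_nonneg) (simp add: a0 b0)
  have c10: "0 \<le> c1 k" for k unfolding c1_def by (rule infsum_nonneg) (simp add: wa0 b0)
  have c20: "0 \<le> c2 k" for k unfolding c2_def by (rule infsum_nonneg) (simp add: wb0 a0)
  have re: "(\<lambda>j. a j * (w (zsub k j) * b (zsub k j))) summable_on UNIV \<and>
            (\<Sum>\<^sub>\<infinity>j. a j * (w (zsub k j) * b (zsub k j))) = c2 k" for k
  proof -
    have bj: "bij_betw (zsub k) UNIV UNIV" using bij_zsub[of k] by simp
    have e: "(\<lambda>x. (\<lambda>j. a j * (w (zsub k j) * b (zsub k j))) (zsub k x)) = (\<lambda>x. (w x * b x) * a (zsub k x))"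
      by (simp add: mult.commute)
    have "(\<lambda>x. (w x * b x) * a (zsub k x)) summable_on UNIV" by (rule Y3(1))
    hence "(\<lambda>j. a j * (w (zsub k j) * b (zsub k j))) summable_on UNIV"
      using summable_on_reindex_bij_betw[OF bj, of "\<lambda>j. a j * (w (zsub k j) * b (zsub k j))"] e by simp
    moreover have "(\<Sum>\<^sub>\<infinity>j. a j * (w (zsub k j) * b (zsub k j))) = c2 k"
      using infsum_reindex_bij_betw[OF bj, of "\<lambda>j. a j * (w (zsub k j) * b (zsub k j))"] e
      unfolding c2_def by simp
    ultimately show ?thesis by simp
  qed
  have pw: "w k * P k \<le> 2 powr s * (c1 k + c2 k)" for k
  proof -
    have "w k * P k = (\<Sum>\<^sub>\<infinity>j. w k * (a j * b (zsub k j)))"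
      unfolding P_def by (rule infsum_cmult_right[symmetric]) (rule sm)
    also have "\<dots> \<le> (\<Sum>\<^sub>\<infinity>j. 2 powr s * ((w j * a j) * b (zsub k j) + a j * (w (zsub k j) * b (zsub k j))))"
    proof (rule infsum_mono)
      show "(\<lambda>j. w k * (a j * b (zsub k j))) summable_on UNIV"
        by (rule summable_on_cmult_right) (rule sm)
      show "(\<lambda>j. 2 powr s * ((w j * a j) * b (zsub k j) + a j * (w (zsub k j) * b (zsub k j)))) summable_on UNIV"
      proof -
        have r1: "(\<lambda>j. a j * (w (zsub k j) * b (zsub k j))) summable_on UNIV" using re[of k] by (rule conjunct1)
        show ?thesis by (intro summable_on_cmult_right summable_on_add Y2(1) r1)
      qed
      fix j
      have "w k \<le> 2 powr s * (w j + w (zsub k j))" unfolding w_def by (rule weight_ineq[OF s0])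
      hence "w k * (a j * b (zsub k j)) \<le> 2 powr s * (w j + w (zsub k j)) * (a j * b (zsub k j))"
        by (rule mult_right_mono) (simp add: a0 b0)
      thus "w k * (a j * b (zsub k j)) \<le> 2 powr s * ((w j * a j) * b (zsub k j) + a j * (w (zsub k j) * b (zsub k j)))"
        by (simp add: algebra_simps)
    qed
    also have "\<dots> = 2 powr s * (c1 k + c2 k)"
    proof -
      have "(\<Sum>\<^sub>\<infinity>j. (w j * a j) * b (zsub k j) + a j * (w (zsub k j) * b (zsub k j))) = c1 k + c2 k"
        unfolding c1_def using re[of k] Y2(1)[of k] by (simp add: infsum_add)
      thus ?thesis by (simp add: infsum_cmult_right')
    qed
    finally show ?thesis .
  qed
  define M where "M = 2 powr (s + 1) * sqrt Z * nW s a * nW s b"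
  have M0: "0 \<le> M" unfolding M_def using Z0 by simp
  have L2c1: "L2_set c1 F \<le> nW s a * (sqrt Z * nW s b)" if F: "finite F" for F
  proof -
    have "(\<Sum>k\<in>F. (c1 k)\<^sup>2) \<le> (nW s a)\<^sup>2 * (sqrt Z * nW s b)\<^sup>2" unfolding c1_def by (rule Y2(2)[OF F])
    hence "L2_set c1 F \<le> sqrt ((nW s a)\<^sup>2 * (sqrt Z * nW s b)\<^sup>2)" unfolding L2_set_def by (rule real_sqrt_le_mono)
    thus ?thesis using Z0 by (simp add: real_sqrt_mult)
  qed
  have L2c2: "L2_set c2 F \<le> nW s b * (sqrt Z * nW s a)" if F: "finite F" for F
  proof -
    have "(\<Sum>k\<in>F. (c2 k)\<^sup>2) \<le> (nW s b)\<^sup>2 * (sqrt Z * nW s a)\<^sup>2" unfolding c2_def by (rule Y3(2)[OF F])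
    hence "L2_set c2 F \<le> sqrt ((nW s b)\<^sup>2 * (sqrt Z * nW s a)\<^sup>2)" unfolding L2_set_def by (rule real_sqrt_le_mono)
    thus ?thesis using Z0 by (simp add: real_sqrt_mult)
  qed
  have "inW s P \<and> nW s P \<le> M"
  proof (rule W2[OF M0])
    fix F :: "(int \<times> int) set" assume F: "finite F"
    have "L2_set (\<lambda>k. knorm k powr s * P k) F \<le> L2_set (\<lambda>k. 2 powr s * (c1 k + c2 k)) F"
      by (rule L2_set_mono) (use pw w0 P0 in \<open>auto simp: w_def\<close>)
    also have "\<dots> = 2 powr s * L2_set (\<lambda>k. c1 k + c2 k) F"
      by (rule L2_set_right_distrib[symmetric]) simp
    also have "\<dots> \<le> 2 powr s * (L2_set c1 F + L2_set c2 F)"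
      by (rule mult_left_mono[OF L2_set_triangle_ineq]) simp
    also have "\<dots> \<le> 2 powr s * (nW s a * (sqrt Z * nW s b) + nW s b * (sqrt Z * nW s a))"
      by (intro mult_left_mono add_mono L2c1[OF F] L2c2[OF F]) simp
    also have "\<dots> = M" unfolding M_def by (simp add: powr_add algebra_simps)
    finally have "L2_set (\<lambda>k. knorm k powr s * P k) F \<le> M" .
    thus "wsum s P F \<le> M\<^sup>2" unfolding wsum_L2 by (intro power_mono) simp_all
  qed
  thus "inW s (\<lambda>k. \<Sum>\<^sub>\<infinity>j. a j * b (zsub k j))"
    and "nW s (\<lambda>k. \<Sum>\<^sub>\<infinity>j. a j * b (zsub k j)) \<le> 2 powr (s + 1) * sqrt Z * nW s a * nW s b"
    unfolding P_def M_def by simp_all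
qed

definition Gd :: "real \<Rightarrow> fcoef \<Rightarrow> bool" where
  "Gd s f \<longleftrightarrow> in_Hs s f \<and> f (0,0) = 0"

definition Qop :: "real \<Rightarrow> real \<Rightarrow> fcoef \<Rightarrow> fcoef \<Rightarrow> fcoef" where
  "Qop \<alpha> \<mu> a b k = (\<i> * of_int (fst k) * conv (\<lambda>j. - riesz2 a j) b k
      + \<i> * of_int (snd k) * conv (riesz1 a) b k) / of_real (1 + \<mu> * knorm k powr (2 * \<alpha>))"

lemma qg_Qop: "qg_nonlin f k / of_real (1 + \<mu> * knorm k powr (2 * \<alpha>)) = Qop \<alpha> \<mu> f f k"
  by (simp add: qg_nonlin_def Qop_def)

lemma conv_zsub: "conv f g k = (\<Sum>\<^sub>\<infinity>j. f j * g (zsub k j))"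
  by (simp add: conv_def zsub_def)

lemma infsum_diff':
  fixes f g :: "'a \<Rightarrow> complex"
  assumes "f summable_on A" "g summable_on A"
  shows "infsum (\<lambda>x. f x - g x) A = infsum f A - infsum g A"
proof -
  have "(\<lambda>x. - g x) summable_on A" using assms(2) by (simp add: summable_on_uminus)
  hence "infsum (\<lambda>x. f x + - g x) A = infsum f A + infsum (\<lambda>x. - g x) A"
    by (rule infsum_add[OF assms(1)])
  thus ?thesis by (simp add: infsum_uminus)
qed

lemma Gd_hs: "Gd s f \<Longrightarrow> inW s (\<lambda>k. cmod (f k))"
  by (simp add: Gd_def in_Hs_inW)

lemma Gd_lin:
  assumes "Gd s f" "Gd s g" "\<And>k. cmod (h k) \<le> cmod (f k) + cmod (g k)" "h (0,0) = 0"
  shows "Gd s h \<and> hs_norm s h \<le> hs_norm s f + hs_norm s g"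
  using W_tri[OF Gd_hs[OF assms(1)] Gd_hs[OF assms(2)], of "\<lambda>k. cmod (h k)"] assms(3,4)
  by (simp add: Gd_def in_Hs_inW hs_norm_nW)

lemma Gd_diff:
  assumes "Gd s f" "Gd s g"
  shows "Gd s (\<lambda>k. f k - g k) \<and> hs_norm s (\<lambda>k. f k - g k) \<le> hs_norm s f + hs_norm s g"
  by (rule Gd_lin[OF assms]) (use assms in \<open>simp_all add: Gd_def norm_triangle_ineq4\<close>)

lemma Gd_add:
  assumes "Gd s f" "Gd s g"
  shows "Gd s (\<lambda>k. f k + g k) \<and> hs_norm s (\<lambda>k. f k + g k) \<le> hs_norm s f + hs_norm s g"
  by (rule Gd_lin[OF assms]) (use assms in \<open>simp_all add: Gd_def norm_triangle_ineq\<close>)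

lemma hs_tri3:
  assumes "Gd s f" "Gd s g" "Gd s h"
  shows "hs_norm s (\<lambda>k. f k - h k) \<le> hs_norm s (\<lambda>k. f k - g k) + hs_norm s (\<lambda>k. g k - h k)"
proof -
  have a: "Gd s (\<lambda>k. f k - g k)" "Gd s (\<lambda>k. g k - h k)" using Gd_diff assms by blast+
  have "cmod (f k - h k) \<le> cmod (f k - g k) + cmod (g k - h k)" for k
    using norm_triangle_ineq[of "f k - g k" "g k - h k"] by simp
  thus ?thesis using Gd_lin[OF a, of "\<lambda>k. f k - h k"] assms by (simp add: Gd_def)
qed

lemma hs_nonneg[simp]: "0 \<le> hs_norm s f"
  by (simp add: hs_norm_nW)

lemma Gd_coef: assumes "Gd s f" "0 \<le> s" shows "cmod (f k) \<le> hs_norm s f"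
proof (cases "k = (0,0)")
  case True thus ?thesis using assms by (simp add: Gd_def)
next
  case False thus ?thesis using W_coef[OF Gd_hs[OF assms(1)] False assms(2)] by (simp add: hs_norm_nW)
qed

lemma Gd_zero_norm: assumes "Gd s f" "0 \<le> s" "hs_norm s f = 0" shows "f = (\<lambda>k. 0)"
  using Gd_coef[OF assms(1,2)] assms(3) by (auto simp: fun_eq_iff)

lemma Gd_zero: "Gd s (\<lambda>k. 0) \<and> hs_norm s (\<lambda>k. 0) = 0"
  using W_zero by (simp add: Gd_def in_Hs_inW hs_norm_nW)

lemma riesz1_le: "cmod (riesz1 a j) \<le> cmod (a j)"
proof (cases "j = (0,0)")
  case False
  have "\<bar>real_of_int (fst j) / knorm j\<bar> \<le> 1" using fst_le_knorm[of j] knorm_pos[OF False]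
    by (simp add: abs_div divide_le_eq_1)
  hence "\<bar>real_of_int (fst j) / knorm j\<bar> * cmod (a j) \<le> 1 * cmod (a j)" by (intro mult_right_mono) auto
  moreover have "cmod (riesz1 a j) = \<bar>real_of_int (fst j) / knorm j\<bar> * cmod (a j)"
    unfolding riesz1_def norm_mult norm_of_real by simp
  ultimately show ?thesis by simp
qed (simp add: riesz1_def)

lemma riesz2_le: "cmod (- riesz2 a j) \<le> cmod (a j)"
proof (cases "j = (0,0)")
  case False
  have "\<bar>real_of_int (snd j) / knorm j\<bar> \<le> 1" using snd_le_knorm[of j] knorm_pos[OF False]
    by (simp add: abs_div divide_le_eq_1)
  hence "\<bar>real_of_int (snd j) / knorm j\<bar> * cmod (a j) \<le> 1 * cmod (a j)" by (intro mult_right_mono) auto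
  moreover have "cmod (- riesz2 a j) = \<bar>real_of_int (snd j) / knorm j\<bar> * cmod (a j)"
    unfolding riesz2_def norm_minus_cancel norm_mult norm_of_real by simp
  ultimately show ?thesis by simp
qed (simp add: riesz2_def)

context
  fixes s Z :: real
  assumes s1: "1 < s" and Z: "lat s Z"
begin

definition Pc :: "fcoef \<Rightarrow> fcoef \<Rightarrow> int \<times> int \<Rightarrow> real" where
  "Pc a b k = (\<Sum>\<^sub>\<infinity>j. cmod (a j) * cmod (b (zsub k j)))"

lemma Pc_props:
  assumes "Gd s a" "Gd s b"
  shows "(\<lambda>j. cmod (a j) * cmod (b (zsub k j))) summable_on UNIV"
    and "inW s (Pc a b)"
    and "nW s (Pc a b) \<le> 2 powr (s + 1) * sqrt Z * hs_norm s a * hs_norm s b"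
    and "0 \<le> Pc a b k"
  using alg[OF s1 Z, of "\<lambda>j. cmod (a j)" "\<lambda>j. cmod (b j)"] assms
  unfolding Pc_def by (auto simp: Gd_def in_Hs_inW hs_norm_nW intro: infsum_nonneg)

lemma conv_bound:
  assumes "Gd s a" "Gd s b" "\<And>j. cmod (c j) \<le> cmod (a j)"
  shows "(\<lambda>j. c j * b (zsub k j)) summable_on UNIV" and "cmod (conv c b k) \<le> Pc a b k"
proof -
  have n: "(\<lambda>j. norm (c j * b (zsub k j))) summable_on UNIV"
  proof (rule summable_on_comparison_test[OF Pc_props(1)[OF assms(1,2), of k]])
    show "norm (c j * b (zsub k j)) \<le> cmod (a j) * cmod (b (zsub k j))" for j
      by (simp add: norm_mult mult_right_mono assms(3))
  qed simp
  thus sm: "(\<lambda>j. c j * b (zsub k j)) summable_on UNIV"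
    by (simp add: summable_on_iff_abs_summable_on_complex)
  have "cmod (conv c b k) \<le> (\<Sum>\<^sub>\<infinity>j. norm (c j * b (zsub k j)))"
    unfolding conv_zsub by (rule norm_infsum_bound) (use n in simp)
  also have "\<dots> \<le> Pc a b k" unfolding Pc_def
    by (rule infsum_mono[OF n Pc_props(1)[OF assms(1,2)]]) (simp add: norm_mult mult_right_mono assms(3))
  finally show "cmod (conv c b k) \<le> Pc a b k" .
qed

end

lemma conv_diff1:
  assumes "(\<lambda>j. c j * b (zsub k j)) summable_on UNIV" "(\<lambda>j. c' j * b (zsub k j)) summable_on UNIV"
  shows "conv (\<lambda>j. c j - c' j) b k = conv c b k - conv c' b k"
  unfolding conv_zsub left_diff_distrib by (rule infsum_diff'[OF assms])

lemma conv_diff2: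
  assumes "(\<lambda>j. c j * b (zsub k j)) summable_on UNIV" "(\<lambda>j. c j * b' (zsub k j)) summable_on UNIV"
  shows "conv c (\<lambda>j. b j - b' j) k = conv c b k - conv c b' k"
  unfolding conv_zsub right_diff_distrib by (rule infsum_diff'[OF assms])

lemma zsub_zneg: "zsub (zneg k) (zneg j) = zneg (zsub k j)"
  by (simp add: zsub_def zneg_def)

lemma zm_real_alt: "zm_real f \<longleftrightarrow> f (0,0) = 0 \<and> (\<forall>k. f (zneg k) = cnj (f k))"
  by (simp add: zm_real_def zneg_def)

lemma conv_cnj:
  assumes "\<And>j. c (zneg j) = cnj (c j)" "\<And>j. b (zneg j) = cnj (b j)"
  shows "conv c b (zneg k) = cnj (conv c b k)"
proof -
  have bj: "bij_betw zneg UNIV UNIV" using bij_zneg by simp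
  have "conv c b (zneg k) = (\<Sum>\<^sub>\<infinity>j. c j * b (zsub (zneg k) j))" by (rule conv_zsub)
  also have "\<dots> = (\<Sum>\<^sub>\<infinity>j. c (zneg j) * b (zsub (zneg k) (zneg j)))"
    by (rule infsum_reindex_bij_betw[OF bj, symmetric])
  also have "\<dots> = (\<Sum>\<^sub>\<infinity>j. cnj (c j * b (zsub k j)))"
    by (simp add: zsub_zneg assms)
  also have "\<dots> = cnj (conv c b k)" unfolding conv_zsub by (rule infsum_cnj)
  finally show ?thesis .
qed

lemma riesz1_cnj: "f (zneg j) = cnj (f j) \<Longrightarrow> riesz1 f (zneg j) = cnj (riesz1 f j)"
  using knorm_zneg[of j] by (simp add: riesz1_def zneg_def)
lemma riesz2_cnj: "f (zneg j) = cnj (f j) \<Longrightarrow> - riesz2 f (zneg j) = cnj (- riesz2 f j)"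
  using knorm_zneg[of j] by (simp add: riesz2_def zneg_def)

lemma Q_zm: assumes "zm_real f" shows "zm_real (Qop \<alpha> \<mu> f f)"
proof -
  have f: "f (zneg j) = cnj (f j)" for j using assms unfolding zm_real_alt by blast
  have c1: "conv (\<lambda>j. - riesz2 f j) f (zneg k) = cnj (conv (\<lambda>j. - riesz2 f j) f k)" for k
    by (rule conv_cnj) (simp_all add: riesz2_cnj f)
  have c2: "conv (riesz1 f) f (zneg k) = cnj (conv (riesz1 f) f k)" for k
    by (rule conv_cnj) (simp_all add: riesz1_cnj f)
  show ?thesis unfolding zm_real_alt
  proof (intro conjI allI)
    show "Qop \<alpha> \<mu> f f (0, 0) = 0" by (simp add: Qop_def)
    fix k
    show "Qop \<alpha> \<mu> f f (zneg k) = cnj (Qop \<alpha> \<mu> f f k)"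
      unfolding Qop_def c1 c2 using knorm_zneg[of k, unfolded zneg_def] by (simp add: zneg_def)
  qed
qed

context
  fixes s Z \<alpha> \<mu> :: real
  assumes s1: "1 < s" and Z: "lat s Z" and al: "1/2 \<le> \<alpha>" and mu: "0 < \<mu>"
begin

definition K0 :: real where "K0 = 2 / \<mu> * (2 powr (s + 1) * sqrt Z)"

lemma Z0: "0 \<le> Z" using Z unfolding lat_def by (metis finite.emptyI empty_Diff sum.empty)

lemma K0_nonneg: "0 \<le> K0"
  unfolding K0_def using mu Z0 by simp

lemma Q_pw:
  assumes "Gd s a" "Gd s b"
  shows "cmod (Qop \<alpha> \<mu> a b k) \<le> 2 / \<mu> * Pc a b k"
proof (cases "k = (0,0)")
  case True thus ?thesis using Pc_props(4)[OF s1 Z assms] mu by (simp add: Qop_def)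
next
  case False
  have kp: "0 < knorm k" by (rule knorm_pos[OF False])
  define d where "d = 1 + \<mu> * knorm k powr (2 * \<alpha>)"
  have "knorm k powr 1 \<le> knorm k powr (2 * \<alpha>)"
    by (rule powr_mono) (use al knorm_ge1[OF False] in auto)
  hence kd: "knorm k \<le> knorm k powr (2 * \<alpha>)" using kp by simp
  have "\<mu> * knorm k \<le> \<mu> * knorm k powr (2 * \<alpha>)" using kd mu by (simp add: mult_left_mono)
  hence dge: "\<mu> * knorm k \<le> d" unfolding d_def by linarith
  have d0: "0 < d" using dge mu kp by (smt (verit) mult_pos_pos)
  have cb1: "cmod (conv (\<lambda>j. - riesz2 a j) b k) \<le> Pc a b k"
    by (rule conv_bound(2)[OF s1 Z assms]) (rule riesz2_le)
  have cb2: "cmod (conv (riesz1 a) b k) \<le> Pc a b k"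
    by (rule conv_bound(2)[OF s1 Z assms]) (rule riesz1_le)
  have "cmod (\<i> * of_int (fst k) * conv (\<lambda>j. - riesz2 a j) b k + \<i> * of_int (snd k) * conv (riesz1 a) b k)
      \<le> cmod (\<i> * of_int (fst k) * conv (\<lambda>j. - riesz2 a j) b k) + cmod (\<i> * of_int (snd k) * conv (riesz1 a) b k)"
    by (rule norm_triangle_ineq)
  also have "\<dots> = \<bar>real_of_int (fst k)\<bar> * cmod (conv (\<lambda>j. - riesz2 a j) b k) + \<bar>real_of_int (snd k)\<bar> * cmod (conv (riesz1 a) b k)"
    by (simp add: norm_mult)
  also have "\<dots> \<le> knorm k * Pc a b k + knorm k * Pc a b k"
    by (intro add_mono mult_mono fst_le_knorm snd_le_knorm cb1 cb2) simp_all
  finally have num: "cmod (\<i> * of_int (fst k) * conv (\<lambda>j. - riesz2 a j) b k + \<i> * of_int (snd k) * conv (riesz1 a) b k)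
      \<le> 2 * knorm k * Pc a b k" by simp
  have "cmod (Qop \<alpha> \<mu> a b k) = cmod (\<i> * of_int (fst k) * conv (\<lambda>j. - riesz2 a j) b k + \<i> * of_int (snd k) * conv (riesz1 a) b k) / d"
    unfolding Qop_def d_def[symmetric] using d0 by (simp add: norm_divide)
  also have "\<dots> \<le> 2 * knorm k * Pc a b k / (\<mu> * knorm k)"
    by (rule frac_le) (use num dge mu kp Pc_props(4)[OF s1 Z assms] in auto)
  also have "\<dots> = 2 / \<mu> * Pc a b k" using kp by (simp add: field_simps)
  finally show ?thesis .
qed

lemma Q_bound:
  assumes "Gd s a" "Gd s b"
  shows "Gd s (Qop \<alpha> \<mu> a b) \<and> hs_norm s (Qop \<alpha> \<mu> a b) \<le> K0 * hs_norm s a * hs_norm s b"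
proof -
  have w: "inW s (\<lambda>k. cmod (Qop \<alpha> \<mu> a b k)) \<and> nW s (\<lambda>k. cmod (Qop \<alpha> \<mu> a b k)) \<le> 2 / \<mu> * nW s (Pc a b)"
  proof (rule W_scale[OF Pc_props(2)[OF s1 Z assms]])
    fix k
    show "\<bar>cmod (Qop \<alpha> \<mu> a b k)\<bar> \<le> 2 / \<mu> * \<bar>Pc a b k\<bar>"
      using Q_pw[OF assms, of k] Pc_props(4)[OF s1 Z assms, of k] by simp
  qed (use mu in simp)
  have "2 / \<mu> * nW s (Pc a b) \<le> 2 / \<mu> * (2 powr (s + 1) * sqrt Z * hs_norm s a * hs_norm s b)"
    by (rule mult_left_mono[OF Pc_props(3)[OF s1 Z assms]]) (use mu in simp)
  hence "nW s (\<lambda>k. cmod (Qop \<alpha> \<mu> a b k)) \<le> K0 * hs_norm s a * hs_norm s b"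
    using w unfolding K0_def by (simp add: mult.assoc)
  thus ?thesis using w by (simp add: Gd_def in_Hs_inW hs_norm_nW Qop_def)
qed

lemma Q_lin1:
  assumes "Gd s a" "Gd s a'" "Gd s b"
  shows "Qop \<alpha> \<mu> (\<lambda>j. a j - a' j) b k = Qop \<alpha> \<mu> a b k - Qop \<alpha> \<mu> a' b k"
proof -
  have aux: "- (c * (x - y)) = - (c * x) - - (c * y)" for c x y :: complex by (simp add: algebra_simps)
  have e2: "(\<lambda>j. - riesz2 (\<lambda>j. a j - a' j) j) = (\<lambda>j. (- riesz2 a j) - (- riesz2 a' j))"
    by (rule ext) (simp only: riesz2_def aux)
  have e1: "riesz1 (\<lambda>j. a j - a' j) = (\<lambda>j. riesz1 a j - riesz1 a' j)"
    by (rule ext) (simp only: riesz1_def right_diff_distrib)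
  have x: "conv (\<lambda>j. - riesz2 (\<lambda>j. a j - a' j) j) b k = conv (\<lambda>j. - riesz2 a j) b k - conv (\<lambda>j. - riesz2 a' j) b k"
    unfolding e2 by (rule conv_diff1; rule conv_bound(1)[OF s1 Z _ assms(3)]; (rule riesz2_le)?; rule assms)
  have y: "conv (riesz1 (\<lambda>j. a j - a' j)) b k = conv (riesz1 a) b k - conv (riesz1 a') b k"
    unfolding e1 by (rule conv_diff1; rule conv_bound(1)[OF s1 Z _ assms(3)]; (rule riesz1_le)?; rule assms)
  show ?thesis unfolding Qop_def x y by (simp add: diff_divide_distrib algebra_simps)
qed

lemma Q_lin2:
  assumes "Gd s a" "Gd s b" "Gd s b'"
  shows "Qop \<alpha> \<mu> a (\<lambda>j. b j - b' j) k = Qop \<alpha> \<mu> a b k - Qop \<alpha> \<mu> a b' k"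
proof -
  have x: "conv (\<lambda>j. - riesz2 a j) (\<lambda>j. b j - b' j) k = conv (\<lambda>j. - riesz2 a j) b k - conv (\<lambda>j. - riesz2 a j) b' k"
    by (rule conv_diff2; rule conv_bound(1)[OF s1 Z assms(1)]) (use assms riesz2_le in auto)
  have y: "conv (riesz1 a) (\<lambda>j. b j - b' j) k = conv (riesz1 a) b k - conv (riesz1 a) b' k"
    by (rule conv_diff2; rule conv_bound(1)[OF s1 Z assms(1)]) (use assms riesz1_le in auto)
  show ?thesis unfolding Qop_def x y by (simp add: diff_divide_distrib algebra_simps)
qed

lemma B_lip:
  assumes "Gd s f" "Gd s g"
  shows "Gd s (\<lambda>k. Qop \<alpha> \<mu> f f k - Qop \<alpha> \<mu> g g k) \<and>
         hs_norm s (\<lambda>k. Qop \<alpha> \<mu> f f k - Qop \<alpha> \<mu> g g k) \<le> K0 * (hs_norm s f + hs_norm s g) * hs_norm s (\<lambda>k. f k - g k)"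
proof -
  have d: "Gd s (\<lambda>k. f k - g k)" using Gd_diff[OF assms] by simp
  have e: "(\<lambda>k. Qop \<alpha> \<mu> f f k - Qop \<alpha> \<mu> g g k) = (\<lambda>k. Qop \<alpha> \<mu> (\<lambda>j. f j - g j) f k + Qop \<alpha> \<mu> g (\<lambda>j. f j - g j) k)"
    using Q_lin1[OF assms(1,2,1)] Q_lin2[OF assms(2,1,2)] by (simp add: fun_eq_iff)
  have q1: "Gd s (Qop \<alpha> \<mu> (\<lambda>j. f j - g j) f) \<and> hs_norm s (Qop \<alpha> \<mu> (\<lambda>j. f j - g j) f) \<le> K0 * hs_norm s (\<lambda>k. f k - g k) * hs_norm s f"
    by (rule Q_bound[OF d assms(1)])
  have q2: "Gd s (Qop \<alpha> \<mu> g (\<lambda>j. f j - g j)) \<and> hs_norm s (Qop \<alpha> \<mu> g (\<lambda>j. f j - g j)) \<le> K0 * hs_norm s g * hs_norm s (\<lambda>k. f k - g k)"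
    by (rule Q_bound[OF assms(2) d])
  have a: "Gd s (\<lambda>k. Qop \<alpha> \<mu> (\<lambda>j. f j - g j) f k + Qop \<alpha> \<mu> g (\<lambda>j. f j - g j) k) \<and>
     hs_norm s (\<lambda>k. Qop \<alpha> \<mu> (\<lambda>j. f j - g j) f k + Qop \<alpha> \<mu> g (\<lambda>j. f j - g j) k)
       \<le> hs_norm s (Qop \<alpha> \<mu> (\<lambda>j. f j - g j) f) + hs_norm s (Qop \<alpha> \<mu> g (\<lambda>j. f j - g j))"
    using Gd_add[of s "Qop \<alpha> \<mu> (\<lambda>j. f j - g j) f" "Qop \<alpha> \<mu> g (\<lambda>j. f j - g j)"] q1 q2 by simp
  have "K0 * hs_norm s (\<lambda>k. f k - g k) * hs_norm s f + K0 * hs_norm s g * hs_norm s (\<lambda>k. f k - g k)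
      = K0 * (hs_norm s f + hs_norm s g) * hs_norm s (\<lambda>k. f k - g k)" by (simp add: algebra_simps)
  thus ?thesis unfolding e using a q1 q2 by linarith
qed

end

lemma set_int_sum:
  fixes f :: "'i \<Rightarrow> real \<Rightarrow> complex"
  assumes "finite F" "\<And>i. i \<in> F \<Longrightarrow> set_integrable lborel A (f i)"
  shows "set_integrable lborel A (\<lambda>x. \<Sum>i\<in>F. f i x) \<and>
         (LINT x:A|lborel. \<Sum>i\<in>F. f i x) = (\<Sum>i\<in>F. LINT x:A|lborel. f i x)"
proof -
  have e: "(\<lambda>x. indicator A x *\<^sub>R (\<Sum>i\<in>F. f i x)) = (\<lambda>x. \<Sum>i\<in>F. indicator A x *\<^sub>R f i x)"
    by (simp add: scaleR_sum_right)
  have i: "\<And>i. i \<in> F \<Longrightarrow> integrable lborel (\<lambda>x. indicator A x *\<^sub>R f i x)"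
    using assms(2) unfolding set_integrable_def by simp
  show ?thesis unfolding set_integrable_def set_lebesgue_integral_def e
    using Bochner_Integration.integral_sum[of F lborel "\<lambda>i x. indicator A x *\<^sub>R f i x"] i by auto
qed

lemma Icc_emeasure_finite: "emeasure lborel {a..b::real} < \<infinity>"
  by (rule emeasure_compact_finite[OF compact_Icc])

lemma set_integrable_const_Icc: "set_integrable lborel {a..b::real} (\<lambda>_. c :: 'b :: {banach, second_countable_topology})"
  unfolding set_integrable_def by (rule integrable_indicator) (simp, rule Icc_emeasure_finite)

lemma int_bound_Icc:
  fixes h :: "real \<Rightarrow> complex"
  assumes ab: "a \<le> b" and hi: "set_integrable lborel {a..b} h" and hb: "\<And>x. x \<in> {a..b} \<Longrightarrow> norm (h x) \<le> C"
  shows "norm (LINT x:{a..b}|lborel. h x) \<le> (b - a) * C"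
proof -
  have "norm (LINT x:{a..b}|lborel. h x) \<le> (LINT x:{a..b}|lborel. norm (h x))"
    by (rule set_integral_norm_bound[OF hi])
  also have "\<dots> \<le> (LINT x:{a..b}|lborel. C)"
    by (rule set_integral_mono[OF set_integrable_norm[OF hi] set_integrable_const_Icc]) (rule hb)
  also have "\<dots> = (b - a) * C"
    using ab by (simp add: set_integral_const Icc_emeasure_finite)
  finally show ?thesis .
qed

lemma cnj_mult_self: "cnj z * z = complex_of_real ((cmod z)\<^sup>2)"
  using complex_norm_square[of z] by (simp only: mult.commute)

lemma int_hs_bound:
  fixes g :: "real \<Rightarrow> fcoef"
  assumes ab: "a \<le> b" and gi: "\<And>k. set_integrable lborel {a..b} (\<lambda>\<tau>. g \<tau> k)"
    and gH: "\<And>\<tau>. \<tau> \<in> {a..b} \<Longrightarrow> in_Hs s (g \<tau>)"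
    and gb: "\<And>\<tau>. \<tau> \<in> {a..b} \<Longrightarrow> hs_norm s (g \<tau>) \<le> K"
  shows "in_Hs s (\<lambda>k. LINT \<tau>:{a..b}|lborel. g \<tau> k) \<and>
         hs_norm s (\<lambda>k. LINT \<tau>:{a..b}|lborel. g \<tau> k) \<le> (b - a) * K"
proof -
  define v where "v k = (LINT \<tau>:{a..b}|lborel. g \<tau> k)" for k
  have "a \<in> {a..b}" using ab by simp
  hence K0: "0 \<le> K" using gb hs_nonneg[of s "g a"] by (meson order.trans)
  have "inW s (\<lambda>k. cmod (v k)) \<and> nW s (\<lambda>k. cmod (v k)) \<le> (b - a) * K"
  proof (rule W2)
    show "0 \<le> (b - a) * K" using ab K0 by simp
    fix F :: "(int \<times> int) set" assume F: "finite F"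
    define S where "S = wsum s (\<lambda>k. cmod (v k)) F"
    define w where "w k = knorm k powr (2 * s)" for k
    have w0: "0 \<le> w k" for k unfolding w_def by simp
    have S0: "0 \<le> S" unfolding S_def wsum_def by (simp add: sum_nonneg)
    have SL: "sqrt S = L2_set (\<lambda>k. knorm k powr s * cmod (v k)) F"
      unfolding S_def wsum_L2 by simp
    note si = set_int_sum[OF F, of "{a..b}" "\<lambda>k \<tau>. complex_of_real (w k) * cnj (v k) * g \<tau> k"]
    have hi: "set_integrable lborel {a..b} (\<lambda>\<tau>. \<Sum>k\<in>F. complex_of_real (w k) * cnj (v k) * g \<tau> k)"
      using si gi by simp
    have "(LINT \<tau>:{a..b}|lborel. \<Sum>k\<in>F. complex_of_real (w k) * cnj (v k) * g \<tau> k)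
          = (\<Sum>k\<in>F. complex_of_real (w k) * cnj (v k) * v k)"
      using si gi by (simp add: v_def)
    also have "\<dots> = complex_of_real S"
      unfolding S_def wsum_def w_def of_real_sum
      by (rule sum.cong[OF refl]) (simp add: mult.assoc cnj_mult_self)
    finally have he: "(LINT \<tau>:{a..b}|lborel. \<Sum>k\<in>F. complex_of_real (w k) * cnj (v k) * g \<tau> k) = complex_of_real S" .
    have pb: "norm (\<Sum>k\<in>F. complex_of_real (w k) * cnj (v k) * g \<tau> k) \<le> sqrt S * K" if t: "\<tau> \<in> {a..b}" for \<tau>
    proof -
      have "norm (\<Sum>k\<in>F. complex_of_real (w k) * cnj (v k) * g \<tau> k) \<le> (\<Sum>k\<in>F. norm (complex_of_real (w k) * cnj (v k) * g \<tau> k))"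
        by (rule norm_sum)
      also have "\<dots> = (\<Sum>k\<in>F. \<bar>knorm k powr s * cmod (v k)\<bar> * \<bar>knorm k powr s * cmod (g \<tau> k)\<bar>)"
      proof (rule sum.cong[OF refl])
        fix k
        have "w k = knorm k powr s * knorm k powr s" unfolding w_def by (simp add: powr_add[symmetric])
        thus "norm (complex_of_real (w k) * cnj (v k) * g \<tau> k) = \<bar>knorm k powr s * cmod (v k)\<bar> * \<bar>knorm k powr s * cmod (g \<tau> k)\<bar>"
          by (simp add: norm_mult abs_mult w0)
      qed
      also have "\<dots> \<le> L2_set (\<lambda>k. knorm k powr s * cmod (v k)) F * L2_set (\<lambda>k. knorm k powr s * cmod (g \<tau> k)) F"
        by (rule L2_set_mult_ineq)
      also have "\<dots> \<le> sqrt S * K"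
      proof (rule mult_mono)
        show "L2_set (\<lambda>k. knorm k powr s * cmod (v k)) F \<le> sqrt S" using SL by simp
        have "L2_set (\<lambda>k. knorm k powr s * cmod (g \<tau> k)) F \<le> nW s (\<lambda>k. cmod (g \<tau> k))"
          by (rule L2_le_nW[OF _ F]) (use gH[OF t] in \<open>simp add: in_Hs_inW\<close>)
        thus "L2_set (\<lambda>k. knorm k powr s * cmod (g \<tau> k)) F \<le> K" using gb[OF t] by (simp add: hs_norm_nW)
      qed (use S0 in simp_all)
      finally show ?thesis .
    qed
    have "S = norm (complex_of_real S)" using S0 by simp
    also have "\<dots> \<le> (b - a) * (sqrt S * K)"
      unfolding he[symmetric] by (rule int_bound_Icc[OF ab hi pb])
    finally have SS: "S \<le> (b - a) * K * sqrt S" by (simp add: mult_ac)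
    have "sqrt S \<le> (b - a) * K"
    proof (cases "S = 0")
      case True thus ?thesis using ab K0 by simp
    next
      case False
      hence sp: "0 < sqrt S" using S0 by simp
      have "sqrt S * sqrt S \<le> (b - a) * K * sqrt S" using SS S0 by simp
      thus ?thesis using sp by (rule mult_right_le_imp_le)
    qed
    hence "(sqrt S)\<^sup>2 \<le> ((b - a) * K)\<^sup>2" using S0 by (intro power_mono) simp_all
    thus "wsum s (\<lambda>k. cmod (v k)) F \<le> ((b - a) * K)\<^sup>2" using S0 unfolding S_def by simp
  qed
  thus ?thesis by (simp add: in_Hs_inW hs_norm_nW v_def)
qed

lemma int_point: fixes a :: real shows "(LINT x:{a..a}|lborel. h x) = (0::complex)"
  unfolding set_lebesgue_integral_def
proof (rule integral_eq_zero_AE)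
  show "AE x in lborel. indicator {a..a} x *\<^sub>R h x = 0"
    using AE_lborel_singleton[of a]
  proof eventually_elim
    fix x :: real assume "x \<noteq> a" hence "x \<notin> {a..a}" by simp
    thus "indicator {a..a} x *\<^sub>R h x = 0" by simp
  qed
qed

lemma int_split:
  fixes h :: "real \<Rightarrow> complex"
  assumes "a \<le> c" "c \<le> b" "set_integrable lborel {a..b} h"
  shows "set_integrable lborel {a..c} h" "set_integrable lborel {c..b} h"
    "(LINT x:{a..b}|lborel. h x) = (LINT x:{a..c}|lborel. h x) + (LINT x:{c..b}|lborel. h x)"
proof -
  show i1: "set_integrable lborel {a..c} h" by (rule set_integrable_subset[OF assms(3)]) (use assms in auto)
  show i2: "set_integrable lborel {c..b} h" by (rule set_integrable_subset[OF assms(3)]) (use assms in auto)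
  have u: "{a..b} = {a..c} \<union> {c..b}" using assms by auto
  have ae: "AE x in lborel. \<not> (x \<in> {a..c} \<and> x \<in> {c..b})"
    using AE_lborel_singleton[of c] by (auto elim!: AE_mp)
  show "(LINT x:{a..b}|lborel. h x) = (LINT x:{a..c}|lborel. h x) + (LINT x:{c..b}|lborel. h x)"
    unfolding u by (rule set_integral_Un_AE[OF ae _ _ i1 i2]) simp_all
qed

lemma int_join:
  fixes h :: "real \<Rightarrow> complex"
  assumes "a \<le> c" "c \<le> b" "set_integrable lborel {a..c} h" "set_integrable lborel {c..b} h"
  shows "set_integrable lborel {a..b} h"
proof -
  have u: "{a..b} = {a..c} \<union> {c..b}" using assms by auto
  show ?thesis unfolding u by (rule set_integrable_Un[OF assms(3,4)]) simp_all
qed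

lemma cont_integrable:
  fixes h :: "real \<Rightarrow> complex"
  assumes "continuous_on {a..b} h"
  shows "set_integrable lborel {a..b} h"
  unfolding set_integrable_def by (rule borel_integrable_compact[OF compact_Icc assms])

lemma lip_cont:
  fixes h :: "real \<Rightarrow> complex"
  assumes "\<And>x y. x \<in> S \<Longrightarrow> y \<in> S \<Longrightarrow> norm (h x - h y) \<le> L * \<bar>x - y\<bar>"
  shows "continuous_on S h"
proof -
  have L: "\<forall>x\<in>S. \<forall>y\<in>S. dist (h x) (h y) \<le> (max L 0) * dist x y"
  proof (intro ballI)
    fix x y assume "x \<in> S" "y \<in> S"
    hence "norm (h x - h y) \<le> L * \<bar>x - y\<bar>" by (rule assms)
    also have "\<dots> \<le> max L 0 * \<bar>x - y\<bar>" by (intro mult_right_mono) auto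
    finally show "dist (h x) (h y) \<le> max L 0 * dist x y" by (simp add: dist_norm dist_real_def)
  qed
  show ?thesis by (rule lipschitz_on_continuous_on[of "max L 0"]) (use L in \<open>auto simp: lipschitz_on_def\<close>)
qed

lemma int_cong:
  assumes "\<And>x. x \<in> A \<Longrightarrow> h x = h' x"
  shows "(LINT x:A|lborel. h x) = (LINT x:A|lborel. h' x)" "set_integrable lborel A h = set_integrable lborel A h'"
proof -
  have "(\<lambda>x. indicator A x *\<^sub>R h x) = (\<lambda>x. indicator A x *\<^sub>R h' x)"
    using assms by (auto simp: fun_eq_iff indicator_def)
  thus "(LINT x:A|lborel. h x) = (LINT x:A|lborel. h' x)" "set_integrable lborel A h = set_integrable lborel A h'"
    unfolding set_lebesgue_integral_def set_integrable_def by simp_all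
qed

lemma int_cnj: "(LINT x:A|lborel. cnj (h x)) = cnj (LINT x:A|lborel. h x)"
proof -
  have e: "(\<lambda>x. indicator A x *\<^sub>R cnj (h x)) = (\<lambda>x. cnj (indicator A x *\<^sub>R h x))"
    by (auto simp: fun_eq_iff indicator_def)
  show ?thesis unfolding set_lebesgue_integral_def e by (rule Bochner_Integration.integral_cnj)
qed

lemma int_diff:
  fixes h g :: "real \<Rightarrow> complex"
  assumes "set_integrable lborel A h" "set_integrable lborel A g"
  shows "(LINT x:A|lborel. h x - g x) = (LINT x:A|lborel. h x) - (LINT x:A|lborel. g x)"
    "set_integrable lborel A (\<lambda>x. h x - g x)"
  using assms by simp_all

lemma hs_minus_comm: "hs_norm s (\<lambda>k. f k - g k) = hs_norm s (\<lambda>k. g k - f k)"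
  unfolding hs_norm_nW by (simp add: norm_minus_commute)

lemma hs_uminus: "hs_norm s (\<lambda>k. - f k) = hs_norm s f"
  unfolding hs_norm_nW by simp

lemma in_Hs_uminus: "in_Hs s (\<lambda>k. - f k) = in_Hs s f"
  unfolding in_Hs_inW by simp

context
  fixes s Z \<alpha> \<mu> :: real
  assumes s1: "1 < s" and Z: "lat s Z" and al: "1/2 \<le> \<alpha>" and mu: "0 < \<mu>"
begin

abbreviation "KK \<equiv> K0 s Z \<mu>"

lemma KK0: "0 \<le> KK" by (rule K0_nonneg[OF s1 Z al mu])
lemma s0: "0 \<le> s" using s1 by simp

lemmas QB = Q_bound[OF s1 Z al mu]
lemmas BL = B_lip[OF s1 Z al mu]

definition good :: "real \<Rightarrow> real \<Rightarrow> real \<Rightarrow> real \<Rightarrow> (real \<Rightarrow> fcoef) \<Rightarrow> bool" where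
  "good a T \<rho> L f \<longleftrightarrow> (\<forall>t\<in>{a..a+T}. zm_real (f t) \<and> Gd s (f t) \<and> hs_norm s (f t) \<le> \<rho>) \<and>
     (\<forall>t\<in>{a..a+T}. \<forall>t'\<in>{a..a+T}. hs_norm s (\<lambda>k. f t k - f t' k) \<le> L * \<bar>t - t'\<bar>)"

definition Pic :: "real \<Rightarrow> fcoef \<Rightarrow> (real \<Rightarrow> fcoef) \<Rightarrow> real \<Rightarrow> fcoef" where
  "Pic a x f t k = x k - (LINT \<sigma>:{a..t}|lborel. Qop \<alpha> \<mu> (f \<sigma>) (f \<sigma>) k)"

lemma goodD:
  assumes "good a T \<rho> L f" "t \<in> {a..a+T}"
  shows "zm_real (f t)" "Gd s (f t)" "hs_norm s (f t) \<le> \<rho>"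
  using assms unfolding good_def by auto

lemma goodL:
  assumes "good a T \<rho> L f" "t \<in> {a..a+T}" "t' \<in> {a..a+T}"
  shows "hs_norm s (\<lambda>k. f t k - f t' k) \<le> L * \<bar>t - t'\<bar>"
  using assms unfolding good_def by auto

lemma B_coef_lip:
  assumes "Gd s f" "Gd s g" "hs_norm s f \<le> \<rho>" "hs_norm s g \<le> \<rho>"
  shows "cmod (Qop \<alpha> \<mu> f f k - Qop \<alpha> \<mu> g g k) \<le> KK * (2 * \<rho>) * hs_norm s (\<lambda>k. f k - g k)"
proof -
  note b = BL[OF assms(1,2)]
  have "cmod (Qop \<alpha> \<mu> f f k - Qop \<alpha> \<mu> g g k) \<le> hs_norm s (\<lambda>k. Qop \<alpha> \<mu> f f k - Qop \<alpha> \<mu> g g k)"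
    using Gd_coef[OF conjunct1[OF b] s0, of k] by simp
  also have "\<dots> \<le> KK * (hs_norm s f + hs_norm s g) * hs_norm s (\<lambda>k. f k - g k)" using b by simp
  also have "\<dots> \<le> KK * (2 * \<rho>) * hs_norm s (\<lambda>k. f k - g k)"
    using assms(3,4) KK0 by (intro mult_right_mono mult_left_mono) simp_all
  finally show ?thesis .
qed

lemma B_cont:
  assumes "good a T \<rho> L f"
  shows "continuous_on {a..a+T} (\<lambda>\<sigma>. Qop \<alpha> \<mu> (f \<sigma>) (f \<sigma>) k)"
proof (rule lip_cont[where L="KK * (2 * \<rho>) * L"])
  fix x y assume x: "x \<in> {a..a+T}" and y: "y \<in> {a..a+T}"
  have "cmod (Qop \<alpha> \<mu> (f x) (f x) k - Qop \<alpha> \<mu> (f y) (f y) k) \<le> KK * (2 * \<rho>) * hs_norm s (\<lambda>k. f x k - f y k)"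
    by (rule B_coef_lip) (use goodD[OF assms x] goodD[OF assms y] in auto)
  also have "\<dots> \<le> KK * (2 * \<rho>) * (L * \<bar>x - y\<bar>)"
  proof (rule mult_left_mono)
    show "hs_norm s (\<lambda>k. f x k - f y k) \<le> L * \<bar>x - y\<bar>" by (rule goodL[OF assms x y])
    have "0 \<le> hs_norm s (f x)" by simp
    hence "0 \<le> \<rho>" using goodD(3)[OF assms x] by linarith
    thus "0 \<le> KK * (2 * \<rho>)" using KK0 by simp
  qed
  finally show "cmod (Qop \<alpha> \<mu> (f x) (f x) k - Qop \<alpha> \<mu> (f y) (f y) k) \<le> KK * (2 * \<rho>) * L * \<bar>x - y\<bar>"
    by (simp add: mult.assoc)
qed

lemma B_int:
  assumes "good a T \<rho> L f" "t \<in> {a..a+T}"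
  shows "set_integrable lborel {a..t} (\<lambda>\<sigma>. Qop \<alpha> \<mu> (f \<sigma>) (f \<sigma>) k)"
  by (rule cont_integrable, rule continuous_on_subset[OF B_cont[OF assms(1)]]) (use assms(2) in auto)

lemma B_int': 
  assumes "good a T \<rho> L f" "t \<in> {a..a+T}" "t' \<in> {a..a+T}" "t' \<le> t"
  shows "set_integrable lborel {t'..t} (\<lambda>\<sigma>. Qop \<alpha> \<mu> (f \<sigma>) (f \<sigma>) k)"
  by (rule cont_integrable, rule continuous_on_subset[OF B_cont[OF assms(1)]]) (use assms(2,3) in auto)

lemma B_bd:
  assumes "good a T \<rho> L f" "\<sigma> \<in> {a..a+T}"
  shows "Gd s (Qop \<alpha> \<mu> (f \<sigma>) (f \<sigma>)) \<and> hs_norm s (Qop \<alpha> \<mu> (f \<sigma>) (f \<sigma>)) \<le> KK * \<rho>\<^sup>2"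
proof -
  note g = goodD[OF assms]
  note q = QB[OF g(2) g(2)]
  have r0: "0 \<le> \<rho>" using g(3) hs_nonneg[of s "f \<sigma>"] by linarith
  have "KK * hs_norm s (f \<sigma>) * hs_norm s (f \<sigma>) \<le> KK * \<rho> * \<rho>"
    using g(3) KK0 r0 by (intro mult_mono mult_left_mono) simp_all
  thus ?thesis using q by (simp add: power2_eq_square)
qed

lemma int_zero: "(LINT \<sigma>:A|lborel. (0::complex)) = 0"
  by (simp add: set_lebesgue_integral_def)

lemma int_hs_B:
  assumes g: "good a T \<rho> L f" and t: "t \<in> {a..a+T}" and t': "t' \<in> {a..a+T}" and tt: "t' \<le> t"
  shows "Gd s (\<lambda>k. LINT \<sigma>:{t'..t}|lborel. Qop \<alpha> \<mu> (f \<sigma>) (f \<sigma>) k) \<and>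
         hs_norm s (\<lambda>k. LINT \<sigma>:{t'..t}|lborel. Qop \<alpha> \<mu> (f \<sigma>) (f \<sigma>) k) \<le> (t - t') * (KK * \<rho>\<^sup>2)"
proof -
  have sub: "\<sigma> \<in> {t'..t} \<Longrightarrow> \<sigma> \<in> {a..a+T}" for \<sigma> using t t' by auto
  have h: "in_Hs s (\<lambda>k. LINT \<sigma>:{t'..t}|lborel. Qop \<alpha> \<mu> (f \<sigma>) (f \<sigma>) k) \<and>
         hs_norm s (\<lambda>k. LINT \<sigma>:{t'..t}|lborel. Qop \<alpha> \<mu> (f \<sigma>) (f \<sigma>) k) \<le> (t - t') * (KK * \<rho>\<^sup>2)"
  proof (rule int_hs_bound[OF tt])
    show "set_integrable lborel {t'..t} (\<lambda>\<sigma>. Qop \<alpha> \<mu> (f \<sigma>) (f \<sigma>) k)" for k by (rule B_int'[OF g t t' tt])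
    show "in_Hs s (Qop \<alpha> \<mu> (f \<sigma>) (f \<sigma>))" if "\<sigma> \<in> {t'..t}" for \<sigma>
      using B_bd[OF g sub[OF that]] by (simp add: Gd_def)
    show "hs_norm s (Qop \<alpha> \<mu> (f \<sigma>) (f \<sigma>)) \<le> KK * \<rho>\<^sup>2" if "\<sigma> \<in> {t'..t}" for \<sigma>
      using B_bd[OF g sub[OF that]] by simp
  qed
  have "(LINT \<sigma>:{t'..t}|lborel. Qop \<alpha> \<mu> (f \<sigma>) (f \<sigma>) (0,0)) = (LINT \<sigma>:{t'..t}|lborel. (0::complex))"
    by (rule int_cong(1)) (use B_bd[OF g sub] in \<open>simp add: Gd_def\<close>)
  hence "(LINT \<sigma>:{t'..t}|lborel. Qop \<alpha> \<mu> (f \<sigma>) (f \<sigma>) (0,0)) = 0" by (simp add: int_zero)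
  thus ?thesis using h by (simp add: Gd_def)
qed

lemma Pic_zm:
  assumes g: "good a T \<rho> L f" and t: "t \<in> {a..a+T}" and x: "zm_real x"
  shows "zm_real (Pic a x f t)"
  unfolding zm_real_alt
proof (intro conjI allI)
  have sub: "\<sigma> \<in> {a..t} \<Longrightarrow> \<sigma> \<in> {a..a+T}" for \<sigma> using t by auto
  have "(LINT \<sigma>:{a..t}|lborel. Qop \<alpha> \<mu> (f \<sigma>) (f \<sigma>) (0,0)) = (LINT \<sigma>:{a..t}|lborel. (0::complex))"
    by (rule int_cong(1)) (use B_bd[OF g sub] in \<open>simp add: Gd_def\<close>)
  thus "Pic a x f t (0, 0) = 0" using x by (simp add: Pic_def int_zero zm_real_alt)
  fix k
  have "(LINT \<sigma>:{a..t}|lborel. Qop \<alpha> \<mu> (f \<sigma>) (f \<sigma>) (zneg k)) = (LINT \<sigma>:{a..t}|lborel. cnj (Qop \<alpha> \<mu> (f \<sigma>) (f \<sigma>) k))"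
  proof (rule int_cong(1))
    fix \<sigma> assume "\<sigma> \<in> {a..t}"
    hence "zm_real (Qop \<alpha> \<mu> (f \<sigma>) (f \<sigma>))" using Q_zm goodD(1)[OF g sub] by blast
    thus "Qop \<alpha> \<mu> (f \<sigma>) (f \<sigma>) (zneg k) = cnj (Qop \<alpha> \<mu> (f \<sigma>) (f \<sigma>) k)" unfolding zm_real_alt by blast
  qed
  moreover have "x (zneg k) = cnj (x k)" using x unfolding zm_real_alt by blast
  ultimately show "Pic a x f t (zneg k) = cnj (Pic a x f t k)"
    unfolding Pic_def by (simp add: int_cnj)
qed

lemma Pic_near:
  assumes g: "good a T \<rho> L f" and t: "t \<in> {a..a+T}" and x: "Gd s x"
  shows "Gd s (Pic a x f t) \<and> hs_norm s (\<lambda>k. Pic a x f t k - x k) \<le> T * (KK * \<rho>\<^sup>2)"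
proof -
  have a: "a \<in> {a..a+T}" using t by auto
  have at: "a \<le> t" using t by auto
  note v = int_hs_B[OF g t a at]
  have e: "(\<lambda>k. Pic a x f t k - x k) = (\<lambda>k. - (LINT \<sigma>:{a..t}|lborel. Qop \<alpha> \<mu> (f \<sigma>) (f \<sigma>) k))"
    by (simp add: Pic_def fun_eq_iff)
  have "hs_norm s (\<lambda>k. Pic a x f t k - x k) \<le> (t - a) * (KK * \<rho>\<^sup>2)"
    unfolding e hs_uminus using v t by auto
  also have "\<dots> \<le> T * (KK * \<rho>\<^sup>2)" using t KK0 by (intro mult_right_mono) auto
  finally have 1: "hs_norm s (\<lambda>k. Pic a x f t k - x k) \<le> T * (KK * \<rho>\<^sup>2)" .
  have "Gd s (\<lambda>k. x k - (LINT \<sigma>:{a..t}|lborel. Qop \<alpha> \<mu> (f \<sigma>) (f \<sigma>) k))"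
    using Gd_diff[OF x conjunct1[OF v]] by simp
  hence "Gd s (Pic a x f t)" by (simp add: Pic_def[abs_def])
  with 1 show ?thesis by simp
qed

lemma Pic_good:
  assumes g: "good a T \<rho> L f" and x: "Gd s x" "zm_real x" "hs_norm s x \<le> R"
    and T0: "0 \<le> T" and hR: "R + T * (KK * \<rho>\<^sup>2) \<le> \<rho>" and hL: "KK * \<rho>\<^sup>2 \<le> L"
  shows "good a T \<rho> L (Pic a x f)"
  unfolding good_def
proof (intro conjI ballI)
  fix t assume t: "t \<in> {a..a+T}"
  show "zm_real (Pic a x f t)" by (rule Pic_zm[OF g t x(2)])
  note n = Pic_near[OF g t x(1)]
  show "Gd s (Pic a x f t)" using n by simp
  have "hs_norm s (Pic a x f t) \<le> hs_norm s (\<lambda>k. Pic a x f t k - x k) + hs_norm s x"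
    using Gd_add[OF conjunct1[OF Gd_diff[OF conjunct1[OF n] x(1)]] x(1)] by simp
  thus "hs_norm s (Pic a x f t) \<le> \<rho>" using n x(3) hR by linarith
next
  have main: "hs_norm s (\<lambda>k. Pic a x f t k - Pic a x f t' k) \<le> L * \<bar>t - t'\<bar>"
    if t: "t \<in> {a..a+T}" and t': "t' \<in> {a..a+T}" and tt: "t' \<le> t" for t t'
  proof -
    have a: "a \<le> t'" using t' by simp
    have e: "(\<lambda>k. Pic a x f t k - Pic a x f t' k) = (\<lambda>k. - (LINT \<sigma>:{t'..t}|lborel. Qop \<alpha> \<mu> (f \<sigma>) (f \<sigma>) k))"
    proof (rule ext)
      fix k
      have "(LINT \<sigma>:{a..t}|lborel. Qop \<alpha> \<mu> (f \<sigma>) (f \<sigma>) k) =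
            (LINT \<sigma>:{a..t'}|lborel. Qop \<alpha> \<mu> (f \<sigma>) (f \<sigma>) k) + (LINT \<sigma>:{t'..t}|lborel. Qop \<alpha> \<mu> (f \<sigma>) (f \<sigma>) k)"
        by (rule int_split(3)[OF a tt B_int[OF g t]])
      thus "Pic a x f t k - Pic a x f t' k = - (LINT \<sigma>:{t'..t}|lborel. Qop \<alpha> \<mu> (f \<sigma>) (f \<sigma>) k)"
        unfolding Pic_def by simp
    qed
    have "hs_norm s (\<lambda>k. Pic a x f t k - Pic a x f t' k) \<le> (t - t') * (KK * \<rho>\<^sup>2)"
      unfolding e hs_uminus using int_hs_B[OF g t t' tt] by simp
    also have "\<dots> \<le> (t - t') * L" using tt hL by (intro mult_left_mono) auto
    finally show ?thesis using tt by (simp add: mult.commute)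
  qed
  fix t t' assume t: "t \<in> {a..a+T}" and t': "t' \<in> {a..a+T}"
  show "hs_norm s (\<lambda>k. Pic a x f t k - Pic a x f t' k) \<le> L * \<bar>t - t'\<bar>"
  proof (cases "t' \<le> t")
    case True thus ?thesis by (rule main[OF t t'])
  next
    case False
    hence "hs_norm s (\<lambda>k. Pic a x f t' k - Pic a x f t k) \<le> L * \<bar>t' - t\<bar>" by (intro main[OF t' t]) simp
    thus ?thesis using hs_minus_comm[of s "Pic a x f t'" "Pic a x f t"] abs_minus_commute[of t' t] by simp
  qed
qed

end

context
  fixes s Z \<alpha> \<mu> :: real
  assumes s1: "1 < s" and Z: "lat s Z" and al: "1/2 \<le> \<alpha>" and mu: "0 < \<mu>"
begin

abbreviation "KK' \<equiv> K0 s Z \<mu>"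
lemmas KK0' = KK0[OF s1 Z al mu]
lemmas BL' = B_lip[OF s1 Z al mu]
lemmas goodD' = goodD[OF s1 Z al mu]
lemmas goodL' = goodL[OF s1 Z al mu]
lemmas B_int'' = B_int[OF s1 Z al mu]
lemma s0': "0 \<le> s" using s1 by simp

lemma Pic_diff:
  assumes gf: "good s a T \<rho> L f" and gg: "good s a T \<rho> L' g" and t: "t \<in> {a..a+T}"
    and D: "\<And>\<sigma>. \<sigma> \<in> {a..a+T} \<Longrightarrow> hs_norm s (\<lambda>k. f \<sigma> k - g \<sigma> k) \<le> D"
  shows "Gd s (\<lambda>k. Pic \<alpha> \<mu> a x f t k - Pic \<alpha> \<mu> a x g t k) \<and>
         hs_norm s (\<lambda>k. Pic \<alpha> \<mu> a x f t k - Pic \<alpha> \<mu> a x g t k) \<le> (t - a) * (KK' * (2 * \<rho>) * D)"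
proof -
  have at: "a \<le> t" using t by simp
  have sub: "\<sigma> \<in> {a..t} \<Longrightarrow> \<sigma> \<in> {a..a+T}" for \<sigma> using t by auto
  have r0: "0 \<le> \<rho>" using goodD'(3)[OF gf t] hs_nonneg[of s "f t"] by linarith
  have D0: "0 \<le> D" using D[OF t] hs_nonneg[of s "\<lambda>k. f t k - g t k"] by linarith
  have ii: "set_integrable lborel {a..t} (\<lambda>\<sigma>. Qop \<alpha> \<mu> (f \<sigma>) (f \<sigma>) k - Qop \<alpha> \<mu> (g \<sigma>) (g \<sigma>) k)"
    "(LINT \<sigma>:{a..t}|lborel. Qop \<alpha> \<mu> (f \<sigma>) (f \<sigma>) k - Qop \<alpha> \<mu> (g \<sigma>) (g \<sigma>) k) =
       (LINT \<sigma>:{a..t}|lborel. Qop \<alpha> \<mu> (f \<sigma>) (f \<sigma>) k) - (LINT \<sigma>:{a..t}|lborel. Qop \<alpha> \<mu> (g \<sigma>) (g \<sigma>) k)" for k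
    using int_diff[OF B_int''[OF gf t] B_int''[OF gg t]] by simp_all
  have e: "(\<lambda>k. Pic \<alpha> \<mu> a x f t k - Pic \<alpha> \<mu> a x g t k) =
     (\<lambda>k. - (LINT \<sigma>:{a..t}|lborel. Qop \<alpha> \<mu> (f \<sigma>) (f \<sigma>) k - Qop \<alpha> \<mu> (g \<sigma>) (g \<sigma>) k))"
    unfolding Pic_def[OF s1 Z al mu] ii(2) by (simp add: fun_eq_iff)
  have bnd: "Gd s (\<lambda>k. Qop \<alpha> \<mu> (f \<sigma>) (f \<sigma>) k - Qop \<alpha> \<mu> (g \<sigma>) (g \<sigma>) k) \<and>
      hs_norm s (\<lambda>k. Qop \<alpha> \<mu> (f \<sigma>) (f \<sigma>) k - Qop \<alpha> \<mu> (g \<sigma>) (g \<sigma>) k) \<le> KK' * (2 * \<rho>) * D"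
    if "\<sigma> \<in> {a..a+T}" for \<sigma>
  proof -
    note b = BL'[OF goodD'(2)[OF gf that] goodD'(2)[OF gg that]]
    have "KK' * (hs_norm s (f \<sigma>) + hs_norm s (g \<sigma>)) * hs_norm s (\<lambda>k. f \<sigma> k - g \<sigma> k) \<le> KK' * (2 * \<rho>) * D"
      using goodD'(3)[OF gf that] goodD'(3)[OF gg that] D[OF that] KK0' r0
      by (intro mult_mono mult_left_mono) simp_all
    thus ?thesis using b by linarith
  qed
  have h: "in_Hs s (\<lambda>k. LINT \<sigma>:{a..t}|lborel. Qop \<alpha> \<mu> (f \<sigma>) (f \<sigma>) k - Qop \<alpha> \<mu> (g \<sigma>) (g \<sigma>) k) \<and>
     hs_norm s (\<lambda>k. LINT \<sigma>:{a..t}|lborel. Qop \<alpha> \<mu> (f \<sigma>) (f \<sigma>) k - Qop \<alpha> \<mu> (g \<sigma>) (g \<sigma>) k) \<le> (t - a) * (KK' * (2 * \<rho>) * D)"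
  proof (rule int_hs_bound[OF at])
    show "set_integrable lborel {a..t} (\<lambda>\<sigma>. Qop \<alpha> \<mu> (f \<sigma>) (f \<sigma>) k - Qop \<alpha> \<mu> (g \<sigma>) (g \<sigma>) k)" for k
      by (rule ii(1))
    show "in_Hs s (\<lambda>k. Qop \<alpha> \<mu> (f \<sigma>) (f \<sigma>) k - Qop \<alpha> \<mu> (g \<sigma>) (g \<sigma>) k)" if "\<sigma> \<in> {a..t}" for \<sigma>
      using bnd[OF sub[OF that]] by (simp add: Gd_def)
    show "hs_norm s (\<lambda>k. Qop \<alpha> \<mu> (f \<sigma>) (f \<sigma>) k - Qop \<alpha> \<mu> (g \<sigma>) (g \<sigma>) k) \<le> KK' * (2 * \<rho>) * D" if "\<sigma> \<in> {a..t}" for \<sigma>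
      using bnd[OF sub[OF that]] by simp
  qed
  have z: "(LINT \<sigma>:{a..t}|lborel. Qop \<alpha> \<mu> (f \<sigma>) (f \<sigma>) (0,0) - Qop \<alpha> \<mu> (g \<sigma>) (g \<sigma>) (0,0)) = 0"
  proof -
    have "(LINT \<sigma>:{a..t}|lborel. Qop \<alpha> \<mu> (f \<sigma>) (f \<sigma>) (0,0) - Qop \<alpha> \<mu> (g \<sigma>) (g \<sigma>) (0,0)) = (LINT \<sigma>:{a..t}|lborel. (0::complex))"
      by (rule int_cong(1)) (use bnd[OF sub] in \<open>simp add: Gd_def\<close>)
    thus ?thesis by (simp add: int_zero)
  qed
  show ?thesis unfolding e hs_uminus using h z by (simp add: Gd_def in_Hs_uminus)
qed

lemma Pic_conv:
  assumes gn: "\<And>n. good s a T \<rho> L (fn n)" and gf: "good s a T \<rho> L f" and t: "t \<in> {a..a+T}"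
    and e: "e \<longlonglongrightarrow> 0" and en: "\<And>n \<sigma>. \<sigma> \<in> {a..a+T} \<Longrightarrow> hs_norm s (\<lambda>k. fn n \<sigma> k - f \<sigma> k) \<le> e n"
  shows "(\<lambda>n. Pic \<alpha> \<mu> a x (fn n) t k) \<longlonglongrightarrow> Pic \<alpha> \<mu> a x f t k"
proof -
  have b: "norm (Pic \<alpha> \<mu> a x (fn n) t k - Pic \<alpha> \<mu> a x f t k) \<le> (t - a) * (KK' * (2 * \<rho>) * e n)" for n
  proof -
    note d = Pic_diff[OF gn[of n] gf t en[where n=n], where x=x]
    have "norm (Pic \<alpha> \<mu> a x (fn n) t k - Pic \<alpha> \<mu> a x f t k) \<le> hs_norm s (\<lambda>k. Pic \<alpha> \<mu> a x (fn n) t k - Pic \<alpha> \<mu> a x f t k)"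
      using Gd_coef[OF conjunct1[OF d] s0', of k] by simp
    thus ?thesis using d by linarith
  qed
  have "(\<lambda>n. (t - a) * (KK' * (2 * \<rho>) * e n)) \<longlonglongrightarrow> 0"
    by (intro tendsto_mult_right_zero e)
  hence "(\<lambda>n. Pic \<alpha> \<mu> a x (fn n) t k - Pic \<alpha> \<mu> a x f t k) \<longlonglongrightarrow> 0"
    by (rule Lim_null_comparison[rotated]) (use b in simp)
  thus ?thesis by (simp add: LIM_zero_iff)
qed

end

context
  fixes s Z \<alpha> \<mu> :: real
  assumes s1: "1 < s" and Z: "lat s Z" and al: "1/2 \<le> \<alpha>" and mu: "0 < \<mu>"
begin

abbreviation "K1 \<equiv> K0 s Z \<mu>"
lemmas K10 = KK0[OF s1 Z al mu]
lemmas gD = goodD[OF s1 Z al mu]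
lemmas gL = goodL[OF s1 Z al mu]
lemmas Pgood = Pic_good[OF s1 Z al mu]
lemmas Pnear = Pic_near[OF s1 Z al mu]
lemmas Pdiff = Pic_diff[OF s1 Z al mu]
lemmas Pconv = Pic_conv[OF s1 Z al mu]
lemma sz: "0 \<le> s" using s1 by simp

definition Tloc :: "real \<Rightarrow> real" where
  "Tloc R = 1 / (4 * (K1 + 1) * (2 * (R + 1)))"

lemma Tloc_pos: "0 \<le> R \<Longrightarrow> 0 < Tloc R"
  unfolding Tloc_def using K10 by simp

lemma Tloc_mono: "0 \<le> R \<Longrightarrow> R \<le> R' \<Longrightarrow> Tloc R' \<le> Tloc R"
  unfolding Tloc_def using K10 by (intro divide_left_mono mult_left_mono mult_pos_pos) auto

lemma existence:
  assumes x: "Gd s x" "zm_real x" "hs_norm s x \<le> R" and R0: "0 \<le> R"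
  shows "\<exists>\<phi>. good s a (Tloc R) (2 * (R + 1)) ((K1 + 1) * (2 * (R + 1))\<^sup>2) \<phi> \<and>
             (\<forall>t\<in>{a..a + Tloc R}. \<forall>k. \<phi> t k = Pic \<alpha> \<mu> a x \<phi> t k)"
proof -
  define \<rho> where "\<rho> = 2 * (R + 1)"
  define KP where "KP = K1 + 1"
  define T where "T = Tloc R"
  define L where "L = KP * \<rho>\<^sup>2"
  have r0: "0 < \<rho>" unfolding \<rho>_def using R0 by simp
  have KP0: "0 < KP" "K1 \<le> KP" unfolding KP_def using K10 by simp_all
  have T0: "0 < T" unfolding T_def by (rule Tloc_pos[OF R0])
  have Te: "T = 1 / (4 * KP * \<rho>)" unfolding T_def Tloc_def KP_def \<rho>_def by simp
  have TK: "T * KP * \<rho> = 1/4" unfolding Te using KP0 r0 by simp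
  have hR: "R + T * (K1 * \<rho>\<^sup>2) \<le> \<rho>"
  proof -
    have "T * (K1 * \<rho>\<^sup>2) \<le> T * (KP * \<rho>\<^sup>2)" using T0 KP0 by (intro mult_left_mono mult_right_mono) simp_all
    also have "\<dots> = \<rho> / 4" using TK by (simp add: power2_eq_square field_simps)
    finally have h: "T * (K1 * \<rho>\<^sup>2) \<le> \<rho> / 4" .
    have "\<rho> / 4 \<le> \<rho> - R" unfolding \<rho>_def using R0 by simp
    with h show ?thesis by linarith
  qed
  have hL: "K1 * \<rho>\<^sup>2 \<le> L" unfolding L_def using KP0 by (intro mult_right_mono) simp_all
  have contr: "T * (K1 * (2 * \<rho>) * D) \<le> D / 2" if "0 \<le> D" for D
  proof -
    have "T * (K1 * (2 * \<rho>) * D) \<le> T * (KP * (2 * \<rho>) * D)"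
      using T0 KP0 r0 that by (intro mult_left_mono mult_right_mono) simp_all
    also have "\<dots> = D / 2" using TK by (simp add: field_simps)
    finally show ?thesis .
  qed
  have I: "a \<in> {a..a+T}" using T0 by simp
  define it where "it = rec_nat (\<lambda>t. x) (\<lambda>n f. Pic \<alpha> \<mu> a x f)"
  have it0: "it 0 = (\<lambda>t. x)" unfolding it_def by simp
  have itS: "it (Suc n) = Pic \<alpha> \<mu> a x (it n)" for n unfolding it_def by simp
  have good0: "good s a T \<rho> L (\<lambda>t. x)"
  proof -
    have "0 \<le> T * (K1 * \<rho>\<^sup>2)" using T0 K10 by simp
    hence xr: "hs_norm s x \<le> \<rho>" using x(3) hR by linarith
    have L0: "0 \<le> L * \<bar>t - t'\<bar>" for t t' unfolding L_def using KP0 by simp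
    show ?thesis unfolding good_def[OF s1 Z al mu] using x xr L0 Gd_zero[of s] by auto
  qed
  have goodn: "good s a T \<rho> L (it n)" for n
  proof (induction n)
    case 0 thus ?case using good0 by (simp add: it0)
  next
    case (Suc n) thus ?case unfolding itS by (rule Pgood[OF _ x _ hR hL]) (use T0 in simp)
  qed
  have Gdn: "Gd s (it n t)" if "t \<in> {a..a+T}" for n t using gD(2)[OF goodn that] .
  have diffs: "hs_norm s (\<lambda>k. it (Suc n) t k - it n t k) \<le> \<rho> * (1/2)^n" if t: "t \<in> {a..a+T}" for n t
    using t
  proof (induction n arbitrary: t)
    case 0
    have "hs_norm s (\<lambda>k. it (Suc 0) t k - it 0 t k) \<le> T * (K1 * \<rho>\<^sup>2)"
      using Pnear[OF goodn[of 0] 0 x(1)] by (simp add: itS it0)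
    thus ?case using hR R0 by simp
  next
    case (Suc n)
    have ee: "(\<lambda>k. it (Suc (Suc n)) t k - it (Suc n) t k) = (\<lambda>k. Pic \<alpha> \<mu> a x (it (Suc n)) t k - Pic \<alpha> \<mu> a x (it n) t k)"
      by (simp only: itS)
    have "hs_norm s (\<lambda>k. it (Suc (Suc n)) t k - it (Suc n) t k) \<le> (t - a) * (K1 * (2 * \<rho>) * (\<rho> * (1/2)^n))"
      unfolding ee by (rule conjunct2[OF Pdiff[OF goodn[of "Suc n"] goodn[of n] Suc.prems]]) (rule Suc.IH)
    also have "\<dots> \<le> T * (K1 * (2 * \<rho>) * (\<rho> * (1/2)^n))"
      using Suc.prems K10 r0 by (intro mult_right_mono) simp_all
    also have "\<dots> \<le> \<rho> * (1/2)^n / 2" by (rule contr) (use r0 in simp)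
    finally show ?case by simp
  qed
  have tele: "hs_norm s (\<lambda>k. it (m + n) t k - it n t k) \<le> 2 * \<rho> * (1/2)^n - 2 * \<rho> * (1/2)^(m+n)"
    if t: "t \<in> {a..a+T}" for m n t
  proof (induction m)
    case 0 thus ?case using Gd_zero[of s] by simp
  next
    case (Suc m)
    have "hs_norm s (\<lambda>k. it (Suc m + n) t k - it n t k) \<le>
          hs_norm s (\<lambda>k. it (Suc (m + n)) t k - it (m + n) t k) + hs_norm s (\<lambda>k. it (m + n) t k - it n t k)"
      using hs_tri3[of s "it (Suc (m+n)) t" "it (m+n) t" "it n t", OF Gdn[OF t] Gdn[OF t] Gdn[OF t]] by simp
    also have "\<dots> \<le> \<rho> * (1/2)^(m+n) + (2 * \<rho> * (1/2)^n - 2 * \<rho> * (1/2)^(m+n))"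
      using diffs[OF t, of "m+n"] Suc.IH by linarith
    also have "\<dots> = 2 * \<rho> * (1/2)^n - 2 * \<rho> * (1/2)^(Suc m + n)" by simp
    finally show ?case .
  qed
  have tele': "hs_norm s (\<lambda>k. it (m + n) t k - it n t k) \<le> 2 * \<rho> * (1/2)^n" if t: "t \<in> {a..a+T}" for m n t
  proof -
    have "0 \<le> 2 * \<rho> * (1/2::real)^(m+n)" using r0 by simp
    thus ?thesis using tele[OF t, of m n] by linarith
  qed
  have coef: "cmod (it (Suc i) t k - it i t k) \<le> \<rho> * (1/2)^i" if t: "t \<in> {a..a+T}" for i t k
  proof -
    have "Gd s (\<lambda>k. it (Suc i) t k - it i t k)"
      using Gd_diff[OF Gdn[where n="Suc i", OF t] Gdn[where n=i, OF t]] by simp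
    from Gd_coef[OF this sz, of k] diffs[OF t, of i] show ?thesis by simp
  qed
  define \<phi> where "\<phi> t k = x k + (\<Sum>i. it (Suc i) t k - it i t k)" for t k
  have conv: "(\<lambda>n. it n t k) \<longlonglongrightarrow> \<phi> t k" if t: "t \<in> {a..a+T}" for t k
  proof -
    define d where "d i = it (Suc i) t k - it i t k" for i
    have sd: "summable d"
    proof (rule summable_comparison_test')
      show "summable (\<lambda>i. \<rho> * (1/2::real)^i)" by (intro summable_mult summable_geometric) simp
      show "norm (d i) \<le> \<rho> * (1/2)^i" for i unfolding d_def by (rule coef[OF t])
    qed
    have e: "it n t k = x k + (\<Sum>i<n. d i)" for n
      by (induction n) (simp_all add: it0 d_def)
    have "(\<lambda>n. x k + (\<Sum>i<n. d i)) \<longlonglongrightarrow> x k + suminf d"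
      by (intro tendsto_add tendsto_const summable_LIMSEQ sd)
    moreover have "(\<lambda>n. it n t k) = (\<lambda>n. x k + (\<Sum>i<n. d i))" using e by (intro ext) (rule e)
    moreover have "x k + suminf d = \<phi> t k" unfolding \<phi>_def d_def by (rule refl)
    ultimately show ?thesis by simp
  qed
  have tail: "in_Hs s (\<lambda>k. \<phi> t k - it n t k) \<and> hs_norm s (\<lambda>k. \<phi> t k - it n t k) \<le> 2 * \<rho> * (1/2)^n"
    if t: "t \<in> {a..a+T}" for n t
  proof -
    have "inW s (\<lambda>k. cmod (\<phi> t k - it n t k)) \<and> nW s (\<lambda>k. cmod (\<phi> t k - it n t k)) \<le> 2 * \<rho> * (1/2)^n"
    proof (rule W_fatou)
      fix k
      have "(\<lambda>m. it (m + n) t k) \<longlonglongrightarrow> \<phi> t k" by (rule LIMSEQ_ignore_initial_segment[OF conv[OF t]])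
      thus "(\<lambda>m. cmod (it (m + n) t k - it n t k)) \<longlonglongrightarrow> cmod (\<phi> t k - it n t k)"
        by (intro tendsto_intros)
    next
      fix m
      show "inW s (\<lambda>k. cmod (it (m + n) t k - it n t k))"
        using Gd_diff[OF Gdn[OF t] Gdn[OF t]] by (simp add: Gd_def in_Hs_inW)
      show "nW s (\<lambda>k. cmod (it (m + n) t k - it n t k)) \<le> 2 * \<rho> * (1/2)^n"
        using tele'[OF t, of m n] by (simp add: hs_norm_nW)
    qed
    thus ?thesis by (simp add: in_Hs_inW hs_norm_nW)
  qed
  have good_phi: "good s a T \<rho> L \<phi>"
    unfolding good_def[OF s1 Z al mu]
  proof (intro conjI ballI)
    fix t assume t: "t \<in> {a..a+T}"
    have z: "\<phi> t (0,0) = 0"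
    proof -
      have "(\<lambda>n. it n t (0,0)) \<longlonglongrightarrow> 0" using Gdn[OF t] by (simp add: Gd_def)
      thus ?thesis using conv[OF t, of "(0,0)"] LIMSEQ_unique by blast
    qed
    show "zm_real (\<phi> t)" unfolding zm_real_alt
    proof (intro conjI allI z)
      fix k
      have "(\<lambda>n. it n t (zneg k)) \<longlonglongrightarrow> cnj (\<phi> t k)"
      proof -
        have "(\<lambda>n. cnj (it n t k)) \<longlonglongrightarrow> cnj (\<phi> t k)" by (intro tendsto_cnj conv[OF t])
        moreover have "it n t (zneg k) = cnj (it n t k)" for n
          using gD(1)[OF goodn t, of n] unfolding zm_real_alt by blast
        ultimately show ?thesis by simp
      qed
      thus "\<phi> t (zneg k) = cnj (\<phi> t k)" using conv[OF t, of "zneg k"] LIMSEQ_unique by blast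
    qed
    have "inW s (\<lambda>k. cmod (\<phi> t k)) \<and> nW s (\<lambda>k. cmod (\<phi> t k)) \<le> \<rho>"
    proof (rule W_fatou)
      show "(\<lambda>n. cmod (it n t k)) \<longlonglongrightarrow> cmod (\<phi> t k)" for k by (intro tendsto_intros conv[OF t])
      show "inW s (\<lambda>k. cmod (it n t k))" for n using Gdn[OF t] by (simp add: Gd_def in_Hs_inW)
      show "nW s (\<lambda>k. cmod (it n t k)) \<le> \<rho>" for n using gD(3)[OF goodn t] by (simp add: hs_norm_nW)
    qed
    thus "Gd s (\<phi> t)" "hs_norm s (\<phi> t) \<le> \<rho>" using z by (simp_all add: Gd_def in_Hs_inW hs_norm_nW)
  next
    fix t t' assume t: "t \<in> {a..a+T}" and t': "t' \<in> {a..a+T}"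
    have "inW s (\<lambda>k. cmod (\<phi> t k - \<phi> t' k)) \<and> nW s (\<lambda>k. cmod (\<phi> t k - \<phi> t' k)) \<le> L * \<bar>t - t'\<bar>"
    proof (rule W_fatou)
      show "(\<lambda>n. cmod (it n t k - it n t' k)) \<longlonglongrightarrow> cmod (\<phi> t k - \<phi> t' k)" for k
        by (intro tendsto_intros conv[OF t] conv[OF t'])
      show "inW s (\<lambda>k. cmod (it n t k - it n t' k))" for n
        using Gd_diff[OF Gdn[OF t] Gdn[OF t']] by (simp add: Gd_def in_Hs_inW)
      show "nW s (\<lambda>k. cmod (it n t k - it n t' k)) \<le> L * \<bar>t - t'\<bar>" for n
        using gL[OF goodn t t'] by (simp add: hs_norm_nW)
    qed
    thus "hs_norm s (\<lambda>k. \<phi> t k - \<phi> t' k) \<le> L * \<bar>t - t'\<bar>" by (simp add: hs_norm_nW)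
  qed
  have eq: "\<phi> t k = Pic \<alpha> \<mu> a x \<phi> t k" if t: "t \<in> {a..a+T}" for t k
  proof -
    have "(\<lambda>n. Pic \<alpha> \<mu> a x (it n) t k) \<longlonglongrightarrow> Pic \<alpha> \<mu> a x \<phi> t k"
    proof (rule Pconv[OF goodn good_phi t])
      show "(\<lambda>n. 2 * \<rho> * (1/2::real)^n) \<longlonglongrightarrow> 0"
        by (intro tendsto_mult_right_zero LIMSEQ_power_zero) simp
      fix n \<sigma> assume "\<sigma> \<in> {a..a+T}"
      thus "hs_norm s (\<lambda>k. it n \<sigma> k - \<phi> \<sigma> k) \<le> 2 * \<rho> * (1/2)^n"
        using tail[of \<sigma> n] hs_minus_comm[of s "it n \<sigma>" "\<phi> \<sigma>"] by simp
    qed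
    moreover have "(\<lambda>n. Pic \<alpha> \<mu> a x (it n) t k) \<longlonglongrightarrow> \<phi> t k"
      using LIMSEQ_Suc[OF conv[OF t, of k]] by (simp add: itS)
    ultimately show ?thesis using LIMSEQ_unique by blast
  qed
  show ?thesis using good_phi eq unfolding \<rho>_def L_def KP_def T_def by blast
qed

end

lemma qg_sol_alt:
  "qg_sol \<alpha> \<mu> s th0 T th \<longleftrightarrow>
     (\<forall>t\<in>{0..T}. zm_real (th t) \<and> in_Hs s (th t)) \<and>
     (\<exists>M. \<forall>t\<in>{0..T}. hs_norm s (th t) \<le> M) \<and>
     (\<forall>t\<in>{0..T}. \<forall>k. set_integrable lborel {0..t} (\<lambda>\<tau>. Qop \<alpha> \<mu> (th \<tau>) (th \<tau>) k) \<and>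
        th t k = th0 k - (LINT \<tau>:{0..t}|lborel. Qop \<alpha> \<mu> (th \<tau>) (th \<tau>) k))"
  unfolding qg_sol_def qg_Qop by (rule refl)

context
  fixes s Z \<alpha> \<mu> :: real
  assumes s1: "1 < s" and Z: "lat s Z" and al: "1/2 \<le> \<alpha>" and mu: "0 < \<mu>"
begin

abbreviation "K2 \<equiv> K0 s Z \<mu>"
lemmas K20 = KK0[OF s1 Z al mu]
lemmas BL2 = B_lip[OF s1 Z al mu]
lemma sz2: "0 \<le> s" using s1 by simp

lemma sol_Gd:
  assumes "qg_sol \<alpha> \<mu> s th0 T th" "t \<in> {0..T}"
  shows "Gd s (th t)" "zm_real (th t)"
  using assms unfolding qg_sol_alt Gd_def zm_real_def by auto

lemma uniq:
  assumes q1: "qg_sol \<alpha> \<mu> s th0 T th" and q2: "qg_sol \<alpha> \<mu> s th0 T th'"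
  shows "\<forall>t\<in>{0..T}. th t = th' t"
proof -
  obtain M1 where M1: "\<And>t. t \<in> {0..T} \<Longrightarrow> hs_norm s (th t) \<le> M1" using q1 unfolding qg_sol_alt by blast
  obtain M2 where M2: "\<And>t. t \<in> {0..T} \<Longrightarrow> hs_norm s (th' t) \<le> M2" using q2 unfolding qg_sol_alt by blast
  define \<rho> where "\<rho> = max 0 (max M1 M2)"
  have r0: "0 \<le> \<rho>" unfolding \<rho>_def by simp
  have b1: "hs_norm s (th t) \<le> \<rho>" if "t \<in> {0..T}" for t using M1[OF that] unfolding \<rho>_def by linarith
  have b2: "hs_norm s (th' t) \<le> \<rho>" if "t \<in> {0..T}" for t using M2[OF that] unfolding \<rho>_def by linarith
  have i1: "set_integrable lborel {0..t} (\<lambda>\<tau>. Qop \<alpha> \<mu> (th \<tau>) (th \<tau>) k)" if "t \<in> {0..T}" for t k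
    using q1 that unfolding qg_sol_alt by blast
  have e1: "th t k = th0 k - (LINT \<tau>:{0..t}|lborel. Qop \<alpha> \<mu> (th \<tau>) (th \<tau>) k)" if "t \<in> {0..T}" for t k
    using q1 that unfolding qg_sol_alt by blast
  have i2: "set_integrable lborel {0..t} (\<lambda>\<tau>. Qop \<alpha> \<mu> (th' \<tau>) (th' \<tau>) k)" if "t \<in> {0..T}" for t k
    using q2 that unfolding qg_sol_alt by blast
  have e2: "th' t k = th0 k - (LINT \<tau>:{0..t}|lborel. Qop \<alpha> \<mu> (th' \<tau>) (th' \<tau>) k)" if "t \<in> {0..T}" for t k
    using q2 that unfolding qg_sol_alt by blast
  have G1: "Gd s (th t)" if "t \<in> {0..T}" for t by (rule sol_Gd(1)[OF q1 that])
  have G2: "Gd s (th' t)" if "t \<in> {0..T}" for t by (rule sol_Gd(1)[OF q2 that])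
  define h where "h = 1 / (4 * (K2 + 1) * (\<rho> + 1))"
  have h0: "0 < h" unfolding h_def using K20 r0 by simp
  have hK: "h * (K2 * (2 * \<rho>) * c) \<le> c / 2" if "0 \<le> c" for c
  proof -
    have "h * (K2 * (2 * \<rho>) * c) \<le> h * ((K2 + 1) * (2 * (\<rho> + 1)) * c)"
      using h0 K20 r0 that by (intro mult_left_mono mult_right_mono mult_mono) simp_all
    also have "\<dots> = c / 2"
    proof -
      define A where "A = (K2 + 1) * (\<rho> + 1)"
      have A: "0 < A" unfolding A_def using K20 r0 by simp
      have hA: "h = 1 / (4 * A)" unfolding h_def A_def by (simp add: mult.assoc)
      have eq: "(K2 + 1) * (2 * (\<rho> + 1)) * c = 2 * A * c" unfolding A_def by simp
      have "h * ((K2 + 1) * (2 * (\<rho> + 1)) * c) = (2 * A * c) / (4 * A)" unfolding eq hA by simp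
      also have "\<dots> = c / 2" using A by simp
      finally show ?thesis .
    qed
    finally show ?thesis .
  qed
  have step: "\<forall>t\<in>{0..T}. t \<le> real n * h \<longrightarrow> th t = th' t" for n
  proof (induction n)
    case 0
    show ?case
    proof (intro ballI impI)
      fix t assume t: "t \<in> {0..T}" and "t \<le> real 0 * h"
      hence t0: "t = 0" by simp
      have tt: "0 \<in> {0..T}" using t t0 by simp
      have "th 0 k = th0 k" for k using e1[OF tt, of k] unfolding int_point by simp
      moreover have "th' 0 k = th0 k" for k using e2[OF tt, of k] unfolding int_point by simp
      ultimately show "th t = th' t" unfolding t0 by (simp add: fun_eq_iff)
    qed
  next
    case (Suc n)
    define a where "a = real n * h"
    have a0: "0 \<le> a" unfolding a_def using h0 by simp
    show ?case
    proof (cases "T \<le> a")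
      case True thus ?thesis using Suc.IH unfolding a_def by auto
    next
      case False
      hence aT: "a < T" by simp
      have eqa: "th \<sigma> = th' \<sigma>" if "\<sigma> \<in> {0..a}" for \<sigma> using Suc.IH that aT unfolding a_def by auto
      define J where "J = {t. t \<in> {0..T} \<and> t \<le> real (Suc n) * h}"
      have Jd: "t \<in> {0..T}" "t \<le> a + h" if "t \<in> J" for t using that unfolding J_def a_def by (auto simp: algebra_simps)
      have it: "\<forall>t\<in>J. hs_norm s (\<lambda>k. th t k - th' t k) \<le> 2 * \<rho> * (1/2)^j" for j
      proof (induction j)
        case 0 show ?case
        proof
          fix t assume t: "t \<in> J"
          have "hs_norm s (\<lambda>k. th t k - th' t k) \<le> hs_norm s (th t) + hs_norm s (th' t)"
            using Gd_diff[OF G1 G2] Jd[OF t] by simp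
          thus "hs_norm s (\<lambda>k. th t k - th' t k) \<le> 2 * \<rho> * (1/2)^0" using b1 b2 Jd[OF t] by fastforce
        qed
      next
        case (Suc j)
        show ?case
        proof
          fix t assume t: "t \<in> J"
          have tT: "t \<in> {0..T}" using Jd(1)[OF t] .
          show "hs_norm s (\<lambda>k. th t k - th' t k) \<le> 2 * \<rho> * (1/2)^(Suc j)"
          proof (cases "t \<le> a")
            case True
            hence "th t = th' t" using eqa tT by auto
            thus ?thesis using Gd_zero[of s] r0 by simp
          next
            case False
            hence at: "a \<le> t" by simp
            have subJ: "\<sigma> \<in> J" if "\<sigma> \<in> {a..t}" for \<sigma> using that t a0 unfolding J_def by auto
            have ii: "set_integrable lborel {0..t} (\<lambda>\<sigma>. Qop \<alpha> \<mu> (th \<sigma>) (th \<sigma>) k - Qop \<alpha> \<mu> (th' \<sigma>) (th' \<sigma>) k)" for k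
              using int_diff(2)[OF i1[OF tT] i2[OF tT]] .
            have e: "th t k - th' t k = - (LINT \<sigma>:{a..t}|lborel. Qop \<alpha> \<mu> (th \<sigma>) (th \<sigma>) k - Qop \<alpha> \<mu> (th' \<sigma>) (th' \<sigma>) k)" for k
            proof -
              have "th t k - th' t k = - (LINT \<sigma>:{0..t}|lborel. Qop \<alpha> \<mu> (th \<sigma>) (th \<sigma>) k - Qop \<alpha> \<mu> (th' \<sigma>) (th' \<sigma>) k)"
                using e1[OF tT, of k] e2[OF tT, of k] int_diff(1)[OF i1[OF tT] i2[OF tT]] by simp
              also have "(LINT \<sigma>:{0..t}|lborel. Qop \<alpha> \<mu> (th \<sigma>) (th \<sigma>) k - Qop \<alpha> \<mu> (th' \<sigma>) (th' \<sigma>) k) =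
                 (LINT \<sigma>:{0..a}|lborel. Qop \<alpha> \<mu> (th \<sigma>) (th \<sigma>) k - Qop \<alpha> \<mu> (th' \<sigma>) (th' \<sigma>) k) +
                 (LINT \<sigma>:{a..t}|lborel. Qop \<alpha> \<mu> (th \<sigma>) (th \<sigma>) k - Qop \<alpha> \<mu> (th' \<sigma>) (th' \<sigma>) k)"
                by (rule int_split(3)[OF a0 at ii])
              also have "(LINT \<sigma>:{0..a}|lborel. Qop \<alpha> \<mu> (th \<sigma>) (th \<sigma>) k - Qop \<alpha> \<mu> (th' \<sigma>) (th' \<sigma>) k) = (LINT \<sigma>:{0..a}|lborel. (0::complex))"
                by (rule int_cong(1)) (simp add: eqa)
              finally show ?thesis by (simp add: int_zero)
            qed
            have c0: "0 \<le> 2 * \<rho> * (1/2::real)^j" using r0 by simp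
            have hb: "in_Hs s (\<lambda>k. LINT \<sigma>:{a..t}|lborel. Qop \<alpha> \<mu> (th \<sigma>) (th \<sigma>) k - Qop \<alpha> \<mu> (th' \<sigma>) (th' \<sigma>) k) \<and>
               hs_norm s (\<lambda>k. LINT \<sigma>:{a..t}|lborel. Qop \<alpha> \<mu> (th \<sigma>) (th \<sigma>) k - Qop \<alpha> \<mu> (th' \<sigma>) (th' \<sigma>) k)
                 \<le> (t - a) * (K2 * (2 * \<rho>) * (2 * \<rho> * (1/2)^j))"
            proof (rule int_hs_bound[OF at])
              show "set_integrable lborel {a..t} (\<lambda>\<sigma>. Qop \<alpha> \<mu> (th \<sigma>) (th \<sigma>) k - Qop \<alpha> \<mu> (th' \<sigma>) (th' \<sigma>) k)" for k
                by (rule int_split(2)[OF a0 at ii])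
              fix \<sigma> assume \<sigma>: "\<sigma> \<in> {a..t}"
              have \<sigma>T: "\<sigma> \<in> {0..T}" using Jd(1)[OF subJ[OF \<sigma>]] .
              note b = BL2[OF G1[OF \<sigma>T] G2[OF \<sigma>T]]
              show "in_Hs s (\<lambda>k. Qop \<alpha> \<mu> (th \<sigma>) (th \<sigma>) k - Qop \<alpha> \<mu> (th' \<sigma>) (th' \<sigma>) k)"
                using b by (simp add: Gd_def)
              have "K2 * (hs_norm s (th \<sigma>) + hs_norm s (th' \<sigma>)) * hs_norm s (\<lambda>k. th \<sigma> k - th' \<sigma> k)
                    \<le> K2 * (2 * \<rho>) * (2 * \<rho> * (1/2)^j)"
                using b1[OF \<sigma>T] b2[OF \<sigma>T] Suc.IH subJ[OF \<sigma>] K20 r0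
                by (intro mult_mono mult_left_mono) auto
              thus "hs_norm s (\<lambda>k. Qop \<alpha> \<mu> (th \<sigma>) (th \<sigma>) k - Qop \<alpha> \<mu> (th' \<sigma>) (th' \<sigma>) k)
                    \<le> K2 * (2 * \<rho>) * (2 * \<rho> * (1/2)^j)" using b by linarith
            qed
            have "hs_norm s (\<lambda>k. th t k - th' t k) =
                  hs_norm s (\<lambda>k. LINT \<sigma>:{a..t}|lborel. Qop \<alpha> \<mu> (th \<sigma>) (th \<sigma>) k - Qop \<alpha> \<mu> (th' \<sigma>) (th' \<sigma>) k)"
              unfolding e hs_uminus by (rule refl)
            also have "\<dots> \<le> (t - a) * (K2 * (2 * \<rho>) * (2 * \<rho> * (1/2)^j))" using hb by simp
            also have "\<dots> \<le> h * (K2 * (2 * \<rho>) * (2 * \<rho> * (1/2)^j))"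
              using Jd(2)[OF t] K20 r0 by (intro mult_right_mono) simp_all
            also have "\<dots> \<le> 2 * \<rho> * (1/2)^j / 2" by (rule hK[OF c0])
            finally show ?thesis by simp
          qed
        qed
      qed
      show ?thesis
      proof (intro ballI impI)
        fix t assume t: "t \<in> {0..T}" "t \<le> real (Suc n) * h"
        hence tJ: "t \<in> J" unfolding J_def by simp
        have lim: "(\<lambda>j. 2 * \<rho> * (1/2::real)^j) \<longlonglongrightarrow> 0" by (intro tendsto_mult_right_zero LIMSEQ_power_zero) simp
        have "\<forall>j. hs_norm s (\<lambda>k. th t k - th' t k) \<le> 2 * \<rho> * (1/2)^j" using it tJ by blast
        hence "hs_norm s (\<lambda>k. th t k - th' t k) \<le> 0" using LIMSEQ_le_const[OF lim] by blast
        hence "hs_norm s (\<lambda>k. th t k - th' t k) = 0" using hs_nonneg[of s "\<lambda>k. th t k - th' t k"] by linarith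
        hence "(\<lambda>k. th t k - th' t k) = (\<lambda>k. 0)" using Gd_zero_norm[OF conjunct1[OF Gd_diff[OF G1[OF t(1)] G2[OF t(1)]]] sz2] by simp
        thus "th t = th' t" by (simp add: fun_eq_iff)
      qed
    qed
  qed
  show ?thesis
  proof
    fix t assume t: "t \<in> {0..T}"
    obtain n :: nat where "t / h \<le> real n" using real_arch_simple by blast
    hence "t \<le> real n * h" using h0 by (simp add: divide_le_eq)
    thus "th t = th' t" using step t by blast
  qed
qed

end

lemma sol_cong:
  assumes q: "qg_sol \<alpha> \<mu> s th0 T th" and e: "\<And>t. t \<in> {0..T} \<Longrightarrow> th t = th' t"
  shows "qg_sol \<alpha> \<mu> s th0 T th'"
proof -
  have c: "(LINT \<tau>:{0..t}|lborel. Qop \<alpha> \<mu> (th \<tau>) (th \<tau>) k) = (LINT \<tau>:{0..t}|lborel. Qop \<alpha> \<mu> (th' \<tau>) (th' \<tau>) k)"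
    "set_integrable lborel {0..t} (\<lambda>\<tau>. Qop \<alpha> \<mu> (th \<tau>) (th \<tau>) k) = set_integrable lborel {0..t} (\<lambda>\<tau>. Qop \<alpha> \<mu> (th' \<tau>) (th' \<tau>) k)"
    if "t \<in> {0..T}" for t k
    using int_cong[of "{0..t}" "\<lambda>\<tau>. Qop \<alpha> \<mu> (th \<tau>) (th \<tau>) k" "\<lambda>\<tau>. Qop \<alpha> \<mu> (th' \<tau>) (th' \<tau>) k"] e that by auto
  show ?thesis using q e c unfolding qg_sol_alt by (smt (verit) atLeastAtMost_iff)
qed

lemma sol_mono:
  assumes "qg_sol \<alpha> \<mu> s th0 T th" "T' \<le> T"
  shows "qg_sol \<alpha> \<mu> s th0 T' th"
  using assms unfolding qg_sol_def by (meson atLeastAtMost_iff order_trans)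

context
  fixes s Z \<alpha> \<mu> :: real
  assumes s1: "1 < s" and Z: "lat s Z" and al: "1/2 \<le> \<alpha>" and mu: "0 < \<mu>"
begin

lemmas gD3 = goodD[OF s1 Z al mu]
lemmas Bint3 = B_int[OF s1 Z al mu]
lemmas Pdef3 = Pic_def[OF s1 Z al mu]

lemma good_sol:
  assumes g: "good s 0 T \<rho> L \<phi>" and e: "\<forall>t\<in>{0..0+T}. \<forall>k. \<phi> t k = Pic \<alpha> \<mu> 0 x \<phi> t k"
  shows "qg_sol \<alpha> \<mu> s x T \<phi>"
  unfolding qg_sol_alt
proof (intro conjI ballI allI exI)
  fix t assume t: "t \<in> {0..T}"
  hence t': "t \<in> {0..0+T}" by simp
  show "zm_real (\<phi> t)" by (rule gD3(1)[OF g t'])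
  show "in_Hs s (\<phi> t)" using gD3(2)[OF g t'] by (simp add: Gd_def)
  show "hs_norm s (\<phi> t) \<le> \<rho>" by (rule gD3(3)[OF g t'])
  fix k
  show "set_integrable lborel {0..t} (\<lambda>\<tau>. Qop \<alpha> \<mu> (\<phi> \<tau>) (\<phi> \<tau>) k)" by (rule Bint3[OF g t'])
  show "\<phi> t k = x k - (LINT \<tau>:{0..t}|lborel. Qop \<alpha> \<mu> (\<phi> \<tau>) (\<phi> \<tau>) k)"
  proof -
    have "\<phi> t k = Pic \<alpha> \<mu> 0 x \<phi> t k" using e t' by blast
    thus ?thesis by (simp add: Pdef3)
  qed
qed

lemma glue:
  assumes q: "qg_sol \<alpha> \<mu> s th0 t0 th" and t00: "0 \<le> t0" and T2: "0 \<le> T2"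
    and g: "good s t0 T2 \<rho> L \<phi>" and e: "\<forall>t\<in>{t0..t0+T2}. \<forall>k. \<phi> t k = Pic \<alpha> \<mu> t0 (th t0) \<phi> t k"
  shows "qg_sol \<alpha> \<mu> s th0 (t0 + T2) (\<lambda>t. if t \<le> t0 then th t else \<phi> t)"
proof -
  define \<psi> where "\<psi> t = (if t \<le> t0 then th t else \<phi> t)" for t
  have t0I: "t0 \<in> {t0..t0+T2}" using T2 by simp
  have p0: "\<phi> t0 = th t0"
  proof (rule ext)
    fix k have "\<phi> t0 k = Pic \<alpha> \<mu> t0 (th t0) \<phi> t0 k" using e t0I by blast
    also have "\<dots> = th t0 k - (LINT \<sigma>:{t0..t0}|lborel. Qop \<alpha> \<mu> (\<phi> \<sigma>) (\<phi> \<sigma>) k)" by (rule Pdef3)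
    also have "(LINT \<sigma>:{t0..t0}|lborel. Qop \<alpha> \<mu> (\<phi> \<sigma>) (\<phi> \<sigma>) k) = 0" by (rule int_point)
    finally show "\<phi> t0 k = th t0 k" by simp
  qed
  have psi_phi: "\<psi> t = \<phi> t" if "t \<in> {t0..t0+T2}" for t using that p0 unfolding \<psi>_def by auto
  have psi_th: "\<psi> t = th t" if "t \<le> t0" for t using that unfolding \<psi>_def by auto
  obtain M where M: "\<And>t. t \<in> {0..t0} \<Longrightarrow> hs_norm s (th t) \<le> M" using q unfolding qg_sol_alt by blast
  have q1: "\<And>t. t \<in> {0..t0} \<Longrightarrow> zm_real (th t) \<and> in_Hs s (th t)" using q unfolding qg_sol_alt by blast
  have qi: "\<And>t k. t \<in> {0..t0} \<Longrightarrow> set_integrable lborel {0..t} (\<lambda>\<tau>. Qop \<alpha> \<mu> (th \<tau>) (th \<tau>) k)"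
    using q unfolding qg_sol_alt by blast
  have qe: "\<And>t k. t \<in> {0..t0} \<Longrightarrow> th t k = th0 k - (LINT \<tau>:{0..t}|lborel. Qop \<alpha> \<mu> (th \<tau>) (th \<tau>) k)"
    using q unfolding qg_sol_alt by blast
  have "qg_sol \<alpha> \<mu> s th0 (t0 + T2) \<psi>"
    unfolding qg_sol_alt
  proof (intro conjI)
    show "\<forall>t\<in>{0..t0 + T2}. zm_real (\<psi> t) \<and> in_Hs s (\<psi> t)"
    proof
    fix t assume t: "t \<in> {0..t0 + T2}"
    show "zm_real (\<psi> t) \<and> in_Hs s (\<psi> t)"
    proof (cases "t \<le> t0")
      case True thus ?thesis using q1[of t] t psi_th by simp
    next
      case False
      hence tI: "t \<in> {t0..t0+T2}" using t by simp
      thus ?thesis using gD3(1,2)[OF g tI] psi_phi[OF tI] by (simp add: Gd_def)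
    qed
    qed
  next
    show "\<exists>M. \<forall>t\<in>{0..t0 + T2}. hs_norm s (\<psi> t) \<le> M"
    proof (intro exI ballI)
      fix t assume t: "t \<in> {0..t0 + T2}"
      show "hs_norm s (\<psi> t) \<le> max M \<rho>"
      proof (cases "t \<le> t0")
        case True thus ?thesis using M[of t] t psi_th by simp
      next
        case False
        hence tI: "t \<in> {t0..t0+T2}" using t by simp
        thus ?thesis using gD3(3)[OF g tI] psi_phi[OF tI] by simp
      qed
    qed
  next
    show "\<forall>t\<in>{0..t0 + T2}. \<forall>k. set_integrable lborel {0..t} (\<lambda>\<tau>. Qop \<alpha> \<mu> (\<psi> \<tau>) (\<psi> \<tau>) k) \<and>
          \<psi> t k = th0 k - (LINT \<tau>:{0..t}|lborel. Qop \<alpha> \<mu> (\<psi> \<tau>) (\<psi> \<tau>) k)"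
    proof (intro ballI allI)
    fix t k assume t: "t \<in> {0..t0 + T2}"
    have cth: "(LINT \<tau>:{0..t'}|lborel. Qop \<alpha> \<mu> (\<psi> \<tau>) (\<psi> \<tau>) k) = (LINT \<tau>:{0..t'}|lborel. Qop \<alpha> \<mu> (th \<tau>) (th \<tau>) k)"
      "set_integrable lborel {0..t'} (\<lambda>\<tau>. Qop \<alpha> \<mu> (\<psi> \<tau>) (\<psi> \<tau>) k) = set_integrable lborel {0..t'} (\<lambda>\<tau>. Qop \<alpha> \<mu> (th \<tau>) (th \<tau>) k)"
      if "t' \<le> t0" for t'
      using int_cong[of "{0..t'}" "\<lambda>\<tau>. Qop \<alpha> \<mu> (\<psi> \<tau>) (\<psi> \<tau>) k" "\<lambda>\<tau>. Qop \<alpha> \<mu> (th \<tau>) (th \<tau>) k"] psi_th that by auto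
    show "set_integrable lborel {0..t} (\<lambda>\<tau>. Qop \<alpha> \<mu> (\<psi> \<tau>) (\<psi> \<tau>) k) \<and>
          \<psi> t k = th0 k - (LINT \<tau>:{0..t}|lborel. Qop \<alpha> \<mu> (\<psi> \<tau>) (\<psi> \<tau>) k)"
    proof (cases "t \<le> t0")
      case True
      have tt: "t \<in> {0..t0}" using t True by simp
      show ?thesis using qi[OF tt, of k] qe[OF tt, of k] cth[OF True] psi_th[OF True] by simp
    next
      case False
      hence tI: "t \<in> {t0..t0+T2}" using t by simp
      have tt0: "t0 \<in> {0..t0}" using t00 by simp
      have c2: "(LINT \<tau>:{t0..t}|lborel. Qop \<alpha> \<mu> (\<psi> \<tau>) (\<psi> \<tau>) k) = (LINT \<tau>:{t0..t}|lborel. Qop \<alpha> \<mu> (\<phi> \<tau>) (\<phi> \<tau>) k)"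
        "set_integrable lborel {t0..t} (\<lambda>\<tau>. Qop \<alpha> \<mu> (\<psi> \<tau>) (\<psi> \<tau>) k) = set_integrable lborel {t0..t} (\<lambda>\<tau>. Qop \<alpha> \<mu> (\<phi> \<tau>) (\<phi> \<tau>) k)"
        using int_cong[of "{t0..t}" "\<lambda>\<tau>. Qop \<alpha> \<mu> (\<psi> \<tau>) (\<psi> \<tau>) k" "\<lambda>\<tau>. Qop \<alpha> \<mu> (\<phi> \<tau>) (\<phi> \<tau>) k"] psi_phi tI by auto
      have i1: "set_integrable lborel {0..t0} (\<lambda>\<tau>. Qop \<alpha> \<mu> (\<psi> \<tau>) (\<psi> \<tau>) k)"
        using cth(2)[of t0] qi[OF tt0] by simp
      have i2: "set_integrable lborel {t0..t} (\<lambda>\<tau>. Qop \<alpha> \<mu> (\<psi> \<tau>) (\<psi> \<tau>) k)"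
        using c2(2) Bint3[OF g tI] by simp
      have ord: "t0 \<le> t" using tI by simp
      have ii: "set_integrable lborel {0..t} (\<lambda>\<tau>. Qop \<alpha> \<mu> (\<psi> \<tau>) (\<psi> \<tau>) k)"
        by (rule int_join[OF t00 ord i1 i2])
      have sp: "(LINT \<tau>:{0..t}|lborel. Qop \<alpha> \<mu> (\<psi> \<tau>) (\<psi> \<tau>) k) =
          (LINT \<tau>:{0..t0}|lborel. Qop \<alpha> \<mu> (\<psi> \<tau>) (\<psi> \<tau>) k) + (LINT \<tau>:{t0..t}|lborel. Qop \<alpha> \<mu> (\<psi> \<tau>) (\<psi> \<tau>) k)"
        by (rule int_split(3)[OF t00 ord ii])
      have "\<psi> t k = \<phi> t k" using psi_phi[OF tI] by simp
      also have "\<dots> = Pic \<alpha> \<mu> t0 (th t0) \<phi> t k" using e tI by blast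
      also have "\<dots> = th t0 k - (LINT \<tau>:{t0..t}|lborel. Qop \<alpha> \<mu> (\<phi> \<tau>) (\<phi> \<tau>) k)"
        by (simp add: Pdef3)
      also have "\<dots> = th0 k - (LINT \<tau>:{0..t}|lborel. Qop \<alpha> \<mu> (\<psi> \<tau>) (\<psi> \<tau>) k)"
        using qe[OF tt0, of k] sp cth(1)[of t0] c2(1) by simp
      finally show ?thesis using ii by simp
    qed
    qed
  qed
  thus ?thesis unfolding \<psi>_def .
qed

end

theorem theorem3p1:
  fixes \<alpha> \<mu> s :: real
  assumes "1/2 \<le> \<alpha>" and "\<alpha> \<le> 1" and "\<mu> > 0" and "s > 1"
  shows "(\<exists>Tf :: real \<Rightarrow> real. \<forall>th0. zm_real th0 \<and> in_Hs s th0 \<longrightarrow>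
            Tf (hs_norm s th0) > 0 \<and>
            (\<exists>th. qg_sol \<alpha> \<mu> s th0 (Tf (hs_norm s th0)) th \<and>
               (\<forall>th'. qg_sol \<alpha> \<mu> s th0 (Tf (hs_norm s th0)) th' \<longrightarrow>
                  (\<forall>t\<in>{0..Tf (hs_norm s th0)}. th' t = th t))))
       \<and> (\<forall>th0. zm_real th0 \<and> in_Hs s th0 \<longrightarrow>
            (let S = {T. T > 0 \<and> (\<exists>th. qg_sol \<alpha> \<mu> s th0 T th)} in
             \<not> bdd_above S \<or>
             ((\<exists>th. \<forall>T. 0 < T \<and> T < Sup S \<longrightarrow> qg_sol \<alpha> \<mu> s th0 T th) \<and>
              (\<forall>th. (\<forall>T. 0 < T \<and> T < Sup S \<longrightarrow> qg_sol \<alpha> \<mu> s th0 T th) \<longrightarrow>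
                 Limsup (at_left (Sup S)) (\<lambda>t. ereal (hs_norm s (th t))) = \<infinity>))))"
proof -
  have s1: "1 < s" using assms(4) by simp
  have al: "1/2 \<le> \<alpha>" using assms(1) by simp
  have mu: "0 < \<mu>" using assms(3) by simp
  obtain Z where "0 \<le> Z" and Zb: "\<forall>F. finite F \<longrightarrow> (\<Sum>k\<in>F - {(0,0)}. knorm k powr (- 2 * s)) \<le> Z"
    using lattice_sum[OF s1] by blast
  have Z: "lat s Z" unfolding lat_def using Zb by blast
  define Tf where "Tf = Tloc s Z \<mu>"
  have Tpos: "0 \<le> R \<Longrightarrow> 0 < Tf R" for R unfolding Tf_def by (rule Tloc_pos[OF s1 Z al mu])
  have G0: "Gd s th0" if "zm_real th0" "in_Hs s th0" for th0
    using that by (simp add: Gd_def zm_real_def)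
  have loc: "\<exists>\<phi>. good s a (Tf R) (2 * (R + 1)) ((K0 s Z \<mu> + 1) * (2 * (R + 1))\<^sup>2) \<phi> \<and>
             (\<forall>t\<in>{a..a + Tf R}. \<forall>k. \<phi> t k = Pic \<alpha> \<mu> a x \<phi> t k)"
    if "Gd s x" "zm_real x" "hs_norm s x \<le> R" "0 \<le> R" for x R a
    unfolding Tf_def by (rule existence[OF s1 Z al mu that])
  have exA: "\<exists>th. qg_sol \<alpha> \<mu> s th0 (Tf (hs_norm s th0)) th" if h1: "zm_real th0" and h2: "in_Hs s th0" for th0
  proof -
    obtain \<phi> where g: "good s 0 (Tf (hs_norm s th0)) (2 * (hs_norm s th0 + 1)) ((K0 s Z \<mu> + 1) * (2 * (hs_norm s th0 + 1))\<^sup>2) \<phi>"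
      and e: "\<forall>t\<in>{0..0 + Tf (hs_norm s th0)}. \<forall>k. \<phi> t k = Pic \<alpha> \<mu> 0 th0 \<phi> t k"
      using loc[OF G0[OF h1 h2] h1 order_refl hs_nonneg, of 0] by blast
    show ?thesis using good_sol[OF s1 Z al mu g e] by blast
  qed
  have partA: "\<forall>th0. zm_real th0 \<and> in_Hs s th0 \<longrightarrow>
            Tf (hs_norm s th0) > 0 \<and>
            (\<exists>th. qg_sol \<alpha> \<mu> s th0 (Tf (hs_norm s th0)) th \<and>
               (\<forall>th'. qg_sol \<alpha> \<mu> s th0 (Tf (hs_norm s th0)) th' \<longrightarrow>
                  (\<forall>t\<in>{0..Tf (hs_norm s th0)}. th' t = th t)))"
  proof (intro allI impI conjI)
    fix th0 assume h: "zm_real th0 \<and> in_Hs s th0"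
    show "Tf (hs_norm s th0) > 0" by (rule Tpos) simp
    obtain th where th: "qg_sol \<alpha> \<mu> s th0 (Tf (hs_norm s th0)) th" using exA h by blast
    show "\<exists>th. qg_sol \<alpha> \<mu> s th0 (Tf (hs_norm s th0)) th \<and>
               (\<forall>th'. qg_sol \<alpha> \<mu> s th0 (Tf (hs_norm s th0)) th' \<longrightarrow>
                  (\<forall>t\<in>{0..Tf (hs_norm s th0)}. th' t = th t))"
      using th uniq[OF s1 Z al mu _ th] by blast
  qed
  have partB: "\<forall>th0. zm_real th0 \<and> in_Hs s th0 \<longrightarrow>
            (let S = {T. T > 0 \<and> (\<exists>th. qg_sol \<alpha> \<mu> s th0 T th)} in
             \<not> bdd_above S \<or>
             ((\<exists>th. \<forall>T. 0 < T \<and> T < Sup S \<longrightarrow> qg_sol \<alpha> \<mu> s th0 T th) \<and>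
              (\<forall>th. (\<forall>T. 0 < T \<and> T < Sup S \<longrightarrow> qg_sol \<alpha> \<mu> s th0 T th) \<longrightarrow>
                 Limsup (at_left (Sup S)) (\<lambda>t. ereal (hs_norm s (th t))) = \<infinity>)))"
  proof (intro allI impI)
    fix th0 assume h: "zm_real th0 \<and> in_Hs s th0"
    define S where "S = {T. T > 0 \<and> (\<exists>th. qg_sol \<alpha> \<mu> s th0 T th)}"
    have inS: "Tf (hs_norm s th0) \<in> S" unfolding S_def using exA h Tpos[of "hs_norm s th0"] by simp
    have Sne: "S \<noteq> {}" using inS by blast
    have main: "\<not> bdd_above S \<or>
             ((\<exists>th. \<forall>T. 0 < T \<and> T < Sup S \<longrightarrow> qg_sol \<alpha> \<mu> s th0 T th) \<and>
              (\<forall>th. (\<forall>T. 0 < T \<and> T < Sup S \<longrightarrow> qg_sol \<alpha> \<mu> s th0 T th) \<longrightarrow>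
                 Limsup (at_left (Sup S)) (\<lambda>t. ereal (hs_norm s (th t))) = \<infinity>))"
    proof (cases "bdd_above S")
      case False thus ?thesis by simp
    next
      case bdd: True
      define Ts where "Ts = Sup S"
      have Ts_pos: "0 < Ts" unfolding Ts_def
        using cSup_upper[OF inS bdd] Tpos[of "hs_norm s th0"] by simp
      have below: "\<exists>T'\<in>S. t < T'" if "t < Ts" for t using that less_cSup_iff[OF Sne bdd] unfolding Ts_def by blast
      define sol where "sol T = (SOME th. qg_sol \<alpha> \<mu> s th0 T th)" for T
      have solS: "qg_sol \<alpha> \<mu> s th0 T (sol T)" if TS: "T \<in> S" for T
      proof -
        obtain y where "qg_sol \<alpha> \<mu> s th0 T y" using TS unfolding S_def by blast
        thus ?thesis unfolding sol_def using someI[of "qg_sol \<alpha> \<mu> s th0 T" y] by blast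
      qed
      define pick where "pick t = (SOME T. T \<in> S \<and> t < T)" for t
      have pick: "pick t \<in> S \<and> t < pick t" if tT: "t < Ts" for t
      proof -
        obtain T' where "T' \<in> S \<and> t < T'" using below[OF tT] by blast
        thus ?thesis unfolding pick_def using someI[of "\<lambda>T. T \<in> S \<and> t < T" T'] by blast
      qed
      define ths where "ths t = sol (pick t) t" for t
      have ths_sol: "qg_sol \<alpha> \<mu> s th0 T ths" if T: "0 < T" "T < Ts" for T
      proof -
        obtain T' where T': "T' \<in> S" "T < T'" using below[OF T(2)] by blast
        have q: "qg_sol \<alpha> \<mu> s th0 T (sol T')" using sol_mono[OF solS[OF T'(1)]] T' by simp
        show ?thesis
        proof (rule sol_cong[OF q])
          fix t assume t: "t \<in> {0..T}"
          have pt: "pick t \<in> S" "t < pick t" using pick[of t] t T by auto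
          define m where "m = min T (pick t)"
          have q1: "qg_sol \<alpha> \<mu> s th0 m (sol T')" using sol_mono[OF solS[OF T'(1)]] T' unfolding m_def by simp
          have q2: "qg_sol \<alpha> \<mu> s th0 m (sol (pick t))" using sol_mono[OF solS[OF pt(1)]] unfolding m_def by simp
          have "t \<in> {0..m}" using t pt unfolding m_def by simp
          thus "sol T' t = ths t" using uniq[OF s1 Z al mu q1 q2] unfolding ths_def by simp
        qed
      qed
      show ?thesis
      proof (rule disjI2, intro conjI)
        show "\<exists>th. \<forall>T. 0 < T \<and> T < Sup S \<longrightarrow> qg_sol \<alpha> \<mu> s th0 T th"
          using ths_sol unfolding Ts_def by blast
        show "\<forall>th. (\<forall>T. 0 < T \<and> T < Sup S \<longrightarrow> qg_sol \<alpha> \<mu> s th0 T th) \<longrightarrow>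
                 Limsup (at_left (Sup S)) (\<lambda>t. ereal (hs_norm s (th t))) = \<infinity>"
        proof (intro allI impI)
          fix th assume th: "\<forall>T. 0 < T \<and> T < Sup S \<longrightarrow> qg_sol \<alpha> \<mu> s th0 T th"
          show "Limsup (at_left (Sup S)) (\<lambda>t. ereal (hs_norm s (th t))) = \<infinity>"
          proof (rule ccontr)
            assume ne: "Limsup (at_left (Sup S)) (\<lambda>t. ereal (hs_norm s (th t))) \<noteq> \<infinity>"
            have "\<exists>R0::real. Limsup (at_left (Sup S)) (\<lambda>t. ereal (hs_norm s (th t))) < ereal R0"
              using ne by (cases "Limsup (at_left (Sup S)) (\<lambda>t. ereal (hs_norm s (th t)))") (auto intro: gt_ex)
            then obtain R0 :: real where "Limsup (at_left (Sup S)) (\<lambda>t. ereal (hs_norm s (th t))) < ereal R0"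
              by blast
            hence ev: "eventually (\<lambda>t. ereal (hs_norm s (th t)) < ereal R0) (at_left Ts)"
              unfolding Ts_def by (rule Limsup_lessD)
            obtain b where b: "b < Ts" "\<And>y. b < y \<Longrightarrow> y < Ts \<Longrightarrow> hs_norm s (th y) < R0"
              using ev unfolding eventually_at_left_field by auto
            define R where "R = max R0 0"
            have R0: "0 \<le> R" unfolding R_def by simp
            define \<tau> where "\<tau> = Tf R"
            have tau: "0 < \<tau>" unfolding \<tau>_def by (rule Tpos[OF R0])
            define t0 where "t0 = max (Ts / 2) (max ((b + Ts) / 2) (Ts - \<tau> / 2))"
            have t0: "0 < t0" "t0 < Ts" "b < t0" "Ts < t0 + \<tau>"
              unfolding t0_def using Ts_pos b(1) tau by (auto simp: less_max_iff_disj max_less_iff_conj)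
            have qt0: "qg_sol \<alpha> \<mu> s th0 t0 th" using th t0 unfolding Ts_def by auto
            have t0in: "t0 \<in> {0..t0}" using t0 by simp
            have x: "Gd s (th t0)" "zm_real (th t0)"
              using sol_Gd[OF s1 Z al mu qt0 t0in] by simp_all
            have xR: "hs_norm s (th t0) \<le> R" using b(2)[OF t0(3) t0(2)] unfolding R_def by simp
            obtain \<phi> where g: "good s t0 (Tf R) (2 * (R + 1)) ((K0 s Z \<mu> + 1) * (2 * (R + 1))\<^sup>2) \<phi>"
              and e: "\<forall>t\<in>{t0..t0 + Tf R}. \<forall>k. \<phi> t k = Pic \<alpha> \<mu> t0 (th t0) \<phi> t k"
              using loc[OF x xR R0] by blast
            have "qg_sol \<alpha> \<mu> s th0 (t0 + Tf R) (\<lambda>t. if t \<le> t0 then th t else \<phi> t)"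
              by (rule glue[OF s1 Z al mu qt0 _ _ g e]) (use t0 tau in \<open>simp_all add: \<tau>_def\<close>)
            hence "t0 + \<tau> \<in> S" using t0 tau by (auto simp: S_def \<tau>_def)
            hence "t0 + \<tau> \<le> Ts" unfolding Ts_def by (rule cSup_upper[OF _ bdd])
            thus False using t0 by simp
          qed
        qed
      qed
    qed
    thus "let S = {T. T > 0 \<and> (\<exists>th. qg_sol \<alpha> \<mu> s th0 T th)} in
             \<not> bdd_above S \<or>
             ((\<exists>th. \<forall>T. 0 < T \<and> T < Sup S \<longrightarrow> qg_sol \<alpha> \<mu> s th0 T th) \<and>
              (\<forall>th. (\<forall>T. 0 < T \<and> T < Sup S \<longrightarrow> qg_sol \<alpha> \<mu> s th0 T th) \<longrightarrow>
                 Limsup (at_left (Sup S)) (\<lambda>t. ereal (hs_norm s (th t))) = \<infinity>))"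
      unfolding Let_def S_def .
  qed
  show ?thesis using partA partB by blast
qed

end
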